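(* Let $\mathcal H$ be a complex separable Hilbert space and let $T \in \mathcal B(\mathcal H)$ with polar decomposition $T = V|T|$. Then $$\|T - V\| = \min\{\|T - X\| : X \in \mathcal I,\ j(V^*V, X^*X) \le 0\} = \min\{\|T - X\| : X \in \mathcal I,\ j(VV^*, XX^* ) \le 0\}.$$ (In particular both minima exist and are attained at $X = V$.)
   Context: $\mathcal B(\mathcal H)$ is the algebra of bounded linear operators on $\mathcal H$, and $\|\cdot\|$ is the operator norm. $\mathcal I$ denotes the set of all partial isometries on $\mathcal H$, i.e. $X \in \mathcal B(\mathcal H)$ with $XX^*X = X$; for such $X$, $X^*X$ is the orthogonal projection onto $\ker(X)^\perp$ and $XX^*$ the orthogonal projection onto $\operatorname{ran}(X)$. $|T| = (T^*T)^{1/2}$. The polar factor of $T$ is the unique $V \in \mathcal I$ with $T = V|T|$ and $\ker V = \ker T$. For orthogonal projections $P, Q$ on $\mathcal H$, define $j(P,Q) := \dim(\operatorname{ran}(P) \cap \ker(Q)) - \dim(\ker(P) \cap \operatorname{ran}(Q)) \in [-\infty, \infty]$ if at least one of these dimensions is finite, and $j(P,Q) := 0$ if both are infinite. *)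

theory Defs
  imports "HOL-Analysis.Analysis" "HOL-Library.Extended_Real"
begin

text \<open>A complex Hilbert space, presented through its realification: a real Hilbert
space (real part of the complex inner product) together with the real-linear map
imult = multiplication by the imaginary unit i.\<close>

class complex_hilbert = real_inner + complete_space +
  fixes imult :: "'a \<Rightarrow> 'a"
  assumes imult_add: "imult (x + y) = imult x + imult y"
    and imult_scaleR: "imult (r *\<^sub>R x) = r *\<^sub>R imult x"
    and imult_imult: "imult (imult x) = - x"
    and inner_imult: "inner (imult x) (imult y) = inner x y"


text \<open>Complex scalar multiplication and the complex inner product
(linear in the first argument, conjugate-linear in the second).\<close>
definition scaleC :: "complex \<Rightarrow> 'a::complex_hilbert \<Rightarrow> 'a" where
  "scaleC c x = Re c *\<^sub>R x + Im c *\<^sub>R imult x"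

definition cinner :: "'a::complex_hilbert \<Rightarrow> 'a \<Rightarrow> complex" where
  "cinner x y = Complex (inner x y) (- inner (imult x) y)"

definition cspan :: "'a::complex_hilbert set \<Rightarrow> 'a set" where
  "cspan B = span (B \<union> imult ` B)"

definition cdim :: "'a::complex_hilbert set \<Rightarrow> enat" where
  "cdim S = (if \<exists>B. finite B \<and> B \<subseteq> S \<and> cspan B = S
             then enat (LEAST n. \<exists>B. finite B \<and> card B = n \<and> B \<subseteq> S \<and> cspan B = S)
             else \<infinity>)"

definition bounded_clinear_op :: "('a::complex_hilbert \<Rightarrow> 'a) \<Rightarrow> bool" where
  "bounded_clinear_op T \<longleftrightarrow> bounded_linear T \<and> (\<forall>x. T (imult x) = imult (T x))"

definition cadj :: "('a::complex_hilbert \<Rightarrow> 'a) \<Rightarrow> ('a \<Rightarrow> 'a)" where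
  "cadj T = (THE S. \<forall>x y. cinner (T x) y = cinner x (S y))"

definition op_abs :: "('a::complex_hilbert \<Rightarrow> 'a) \<Rightarrow> ('a \<Rightarrow> 'a)" where
  "op_abs T = (THE A. bounded_clinear_op A \<and> (\<forall>x. Im (cinner (A x) x) = 0 \<and> 0 \<le> Re (cinner (A x) x))
                 \<and> (\<forall>x. A (A x) = cadj T (T x)))"

definition ker_op :: "('a::complex_hilbert \<Rightarrow> 'a) \<Rightarrow> 'a set" where
  "ker_op T = {x. T x = 0}"

definition partial_isometries :: "('a::complex_hilbert \<Rightarrow> 'a) set" where
  "partial_isometries = {X. bounded_clinear_op X \<and> (\<forall>x. X (cadj X (X x)) = X x)}"

definition jidx :: "('a::complex_hilbert \<Rightarrow> 'a) \<Rightarrow> ('a \<Rightarrow> 'a) \<Rightarrow> ereal" where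
  "jidx P Q = (let a = cdim (range P \<inter> ker_op Q); b = cdim (ker_op P \<inter> range Q) in
      if a = \<infinity> \<and> b = \<infinity> then 0 else ereal_of_enat a - ereal_of_enat b)"

end

theory Submission
  imports Defs "HOL-Computational_Algebra.Formal_Power_Series"
begin


lemma imult_linear: "linear (imult :: 'a::complex_hilbert \<Rightarrow> 'a)"
  by (rule linearI) (simp_all add: imult_add imult_scaleR)

lemma norm_imult[simp]: "norm (imult x) = norm (x::'a::complex_hilbert)"
  by (simp add: norm_eq_sqrt_inner inner_imult)

lemma imult_bl: "bounded_linear (imult :: 'a::complex_hilbert \<Rightarrow> 'a)"
proof -
  interpret linear imult by (rule imult_linear)
  show ?thesis by unfold_locales (rule exI[of _ 1], simp)
qed

lemma inner_imult_left: "inner (imult x) y = - inner x (imult (y::'a::complex_hilbert))"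
proof -
  have "inner (imult x) y = inner (imult (imult x)) (imult y)" by (simp add: inner_imult)
  also have "\<dots> = - inner x (imult y)" by (simp add: imult_imult)
  finally show ?thesis .
qed

lemma inner_imult_self[simp]: "inner (imult x) (x::'a::complex_hilbert) = 0"
  using inner_imult_left[of x x] by (simp add: inner_commute)

lemma imult_zero[simp]: "imult (0::'a::complex_hilbert) = 0"
  using linear_0[OF imult_linear] by simp

lemma imult_minus: "imult (x - y) = imult x - imult (y::'a::complex_hilbert)"
  by (rule linear_diff[OF imult_linear])

lemma imult_uminus: "imult (- x) = - imult (x::'a::complex_hilbert)"
  by (rule linear_neg[OF imult_linear])

lemma projection_exists:
  fixes M :: "'a::{real_inner,complete_space} set"
  assumes sub: "subspace M" and cl: "closed M"
  shows "\<exists>m\<in>M. \<forall>y\<in>M. inner (x - m) y = 0"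
proof -
  define d where "d = Inf ((\<lambda>m. norm (x - m)) ` M)"
  have M0: "0 \<in> M" using sub by (simp add: subspace_0)
  have bdd: "bdd_below ((\<lambda>m. norm (x - m)) ` M)" by (rule bdd_belowI[of _ 0]) auto
  have dle: "d \<le> norm (x - m)" if "m \<in> M" for m
    unfolding d_def using bdd that by (auto intro: cInf_lower)
  have d0: "0 \<le> d" unfolding d_def using M0 by (intro cInf_greatest) auto
  have "\<exists>m\<in>M. norm (x - m)^2 < d^2 + 1 / real (Suc n)" for n
  proof -
    have "sqrt (d^2 + 1 / real (Suc n)) > d"
      using d0 by (simp add: real_less_rsqrt)
    then obtain m where m: "m \<in> M" "norm (x - m) < sqrt (d^2 + 1 / real (Suc n))"
      unfolding d_def using M0 by (subst (asm) cInf_less_iff[OF _ bdd]) auto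
    then have "norm (x - m)^2 < d^2 + 1 / real (Suc n)"
      by (metis norm_ge_zero real_sqrt_less_iff real_sqrt_pow2_iff sqrt_le_D less_le_not_le
          linorder_not_less power2_less_imp_less real_sqrt_abs real_sqrt_less_mono
          real_less_rsqrt abs_of_nonneg)
    then show ?thesis using m by blast
  qed
  then obtain f where fM: "\<And>n. f n \<in> M" and fd: "\<And>n. norm (x - f n)^2 < d^2 + 1 / real (Suc n)"
    by metis
  have par: "norm (f n - f k)^2 \<le> 2 / real (Suc n) + 2 / real (Suc k)" for n k
  proof -
    have mid: "(1/2) *\<^sub>R (f n + f k) \<in> M"
      using sub fM by (simp add: subspace_add subspace_scale)
    have "d \<le> norm (x - (1/2) *\<^sub>R (f n + f k))" by (rule dle[OF mid])
    then have h: "d^2 \<le> norm (x - (1/2) *\<^sub>R (f n + f k))^2" using d0 by (simp add: power_mono)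
    have pl: "norm (f n - f k)^2 = 2 * norm (x - f n)^2 + 2 * norm (x - f k)^2 - 4 * norm (x - (1/2) *\<^sub>R (f n + f k))^2"
      unfolding power2_norm_eq_inner by (simp add: algebra_simps inner_add_left inner_add_right inner_diff_left inner_diff_right inner_commute)
    show ?thesis using fd[of n] fd[of k] h pl by linarith
  qed
  have "Cauchy f"
  proof (rule metric_CauchyI)
    fix e :: real assume e: "0 < e"
    obtain N where N: "4 / e^2 < real N" using reals_Archimedean2 by blast
    show "\<exists>M. \<forall>m\<ge>M. \<forall>n\<ge>M. dist (f m) (f n) < e"
    proof (intro exI allI impI)
      fix m n assume mn: "N \<le> m" "N \<le> n"
      have "2 / real (Suc m) \<le> 2 / real (Suc N)" "2 / real (Suc n) \<le> 2 / real (Suc N)"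
        using mn by (auto intro!: divide_left_mono)
      moreover have "4 / real (Suc N) < e^2"
        using N e by (simp add: field_simps) (smt (verit) zero_less_power)
      ultimately have "norm (f m - f n)^2 < e^2" using par[of m n] by linarith
      then show "dist (f m) (f n) < e" using e by (simp add: dist_norm power_less_imp_less_base)
    qed
  qed
  then obtain m where lim: "f \<longlonglongrightarrow> m" using convergent_eq_Cauchy by blast
  have mM: "m \<in> M" using cl fM lim by (metis closed_sequentially)
  have "(\<lambda>n. norm (x - f n)^2) \<longlonglongrightarrow> norm (x - m)^2"
    by (intro tendsto_intros lim)
  moreover have "(\<lambda>n. d^2 + 1 / real (Suc n)) \<longlonglongrightarrow> d^2 + 0"
    by (intro tendsto_intros LIMSEQ_inverse_real_of_nat[unfolded inverse_eq_divide])
  ultimately have "norm (x - m)^2 \<le> d^2 + 0"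
    using fd by (intro LIMSEQ_le[of "\<lambda>n. norm (x - f n)^2" _ "\<lambda>n. d^2 + 1 / real (Suc n)"]) (auto intro: less_imp_le)
  then have mmin: "norm (x - m)^2 \<le> norm (x - y)^2" if "y \<in> M" for y
    using dle[OF that] d0 by (smt (verit) power_mono)
  show ?thesis
  proof (intro bexI[OF _ mM] ballI)
    fix y assume yM: "y \<in> M"
    let ?a = "inner (x - m) y"
    have "norm (x - m)^2 \<le> norm (x - (m + t *\<^sub>R y))^2" for t
      using mmin[of "m + t *\<^sub>R y"] sub mM yM by (simp add: subspace_add subspace_scale)
    then have q: "0 \<le> t^2 * inner y y - 2 * t * ?a" for t
      unfolding power2_norm_eq_inner
      by (simp add: algebra_simps inner_add_left inner_add_right inner_diff_left inner_diff_right inner_commute power2_eq_square)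
    show "?a = 0"
    proof (rule ccontr)
      assume a: "?a \<noteq> 0"
      define t where "t = ?a / (inner y y + 1)"
      have yy: "inner y y \<ge> 0" by simp
      have "t^2 * inner y y - 2 * t * ?a = ?a^2 * (inner y y - 2 * (inner y y + 1)) / (inner y y + 1)^2"
        unfolding t_def using yy by (simp add: divide_simps power2_eq_square) (simp add: algebra_simps)
      also have "\<dots> < 0" using a yy
        by (intro divide_neg_pos mult_pos_neg) (auto simp: add_nonneg_eq_0_iff, smt (verit) yy)
      finally show False using q[of t] by simp
    qed
  qed
qed


lemma inner_ext: "(\<And>x. inner x u = inner x (v::'a::real_inner)) \<Longrightarrow> u = v"
  by (metis inner_diff_right inner_eq_zero_iff right_minus_eq)

lemma riesz:
  fixes f :: "'a::{real_inner,complete_space} \<Rightarrow> real"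
  assumes f: "bounded_linear f"
  shows "\<exists>z. \<forall>x. f x = inner x z"
proof (cases "\<forall>x. f x = 0")
  case True then show ?thesis by (intro exI[of _ 0]) simp
next
  case False
  then obtain x0 where x0: "f x0 \<noteq> 0" by blast
  interpret bounded_linear f by fact
  let ?M = "{x. f x = 0}"
  have sub: "subspace ?M" by (auto simp: subspace_def add scale)
  have cl: "closed ?M" by (intro closed_Collect_eq continuous_on continuous_on_id continuous_on_const)
  obtain m where m: "f m = 0" "\<forall>y\<in>?M. inner (x0 - m) y = 0"
    using projection_exists[OF sub cl, of x0] by auto
  define w where "w = x0 - m"
  have fw: "f w \<noteq> 0" using x0 m by (simp add: w_def diff)
  have w0: "inner w w \<noteq> 0" using fw by (auto simp: zero)
  have "inner x w = f x / f w * inner w w" for x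
  proof -
    have "x - (f x / f w) *\<^sub>R w \<in> ?M" using fw by (simp add: diff scale)
    then have "inner (x - (f x / f w) *\<^sub>R w) w = 0" using m(2) by (auto simp: w_def inner_commute)
    then show ?thesis by (simp add: inner_diff_left)
  qed
  then show ?thesis using fw w0
    by (intro exI[of _ "(f w / inner w w) *\<^sub>R w"]) (simp add: field_simps)
qed

definition radj :: "('a::{real_inner,complete_space} \<Rightarrow> 'a) \<Rightarrow> 'a \<Rightarrow> 'a" where
  "radj T y = (SOME z. \<forall>x. inner (T x) y = inner x z)"

lemma radj:
  assumes T: "bounded_linear T"
  shows "inner (T x) y = inner x (radj T y)"
proof -
  have "bounded_linear (\<lambda>x. inner (T x) y)"
    using bounded_linear_compose[OF bounded_linear_inner_left T] .
  then obtain z where "\<forall>x. inner (T x) y = inner x z" using riesz by blast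
  then have "\<forall>x. inner (T x) y = inner x (radj T y)" unfolding radj_def by (rule someI)
  then show ?thesis by blast
qed

lemma radj_bl:
  assumes T: "bounded_linear T"
  shows "bounded_linear (radj T)"
proof -
  have add: "radj T (a + b) = radj T a + radj T b" for a b
    by (rule inner_ext) (simp add: radj[OF T, symmetric] inner_add_right)
  have sc: "radj T (r *\<^sub>R a) = r *\<^sub>R radj T a" for r a
    by (rule inner_ext) (simp add: radj[OF T, symmetric])
  obtain K where K: "\<And>x. norm (T x) \<le> norm x * K" "K \<ge> 0"
    using bounded_linear.nonneg_bounded[OF T] by blast
  have "norm (radj T y) \<le> norm y * K" for y
  proof (cases "radj T y = 0")
    case True then show ?thesis using K by simp
  next
    case False
    have "norm (radj T y)^2 = inner (T (radj T y)) y"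
      by (simp add: radj[OF T] power2_norm_eq_inner)
    also have "\<dots> \<le> norm (T (radj T y)) * norm y" by (rule norm_cauchy_schwarz)
    also have "\<dots> \<le> norm (radj T y) * K * norm y" using K by (simp add: mult_right_mono)
    finally show ?thesis using False by (simp add: power2_eq_square mult_ac)
  qed
  then show ?thesis by (intro bounded_linear_intro[OF add sc])
qed

lemma radj_unique:
  assumes T: "bounded_linear T" and S: "\<And>x y. inner (T x) y = inner x (S y)"
  shows "S = radj T"
  by (rule ext, rule inner_ext) (metis S radj[OF T])

lemma bclD: "bounded_clinear_op T \<Longrightarrow> bounded_linear T"
  and bclI: "bounded_clinear_op T \<Longrightarrow> T (imult x) = imult (T x)"
  by (auto simp: bounded_clinear_op_def)

lemma radj_imult:
  assumes T: "bounded_clinear_op T"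
  shows "radj T (imult y) = imult (radj T y)"
proof (rule inner_ext)
  fix x
  have bl: "bounded_linear T" using T by (rule bclD)
  have "inner x (radj T (imult y)) = inner (T x) (imult y)" by (simp add: radj[OF bl])
  also have "\<dots> = - inner (imult (T x)) y" by (simp add: inner_imult_left)
  also have "\<dots> = - inner (T (imult x)) y" by (simp add: bclI[OF T])
  also have "\<dots> = - inner (imult x) (radj T y)" by (simp add: radj[OF bl])
  also have "\<dots> = inner x (imult (radj T y))" by (simp add: inner_imult_left)
  finally show "inner x (radj T (imult y)) = inner x (imult (radj T y))" .
qed

lemma cadj_eq:
  assumes T: "bounded_clinear_op T"
  shows "cadj T = radj T"
proof -
  have bl: "bounded_linear T" using T by (rule bclD)
  have P: "\<forall>x y. cinner (T x) y = cinner x (radj T y)"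
  proof (intro allI)
    fix x y
    have "inner (imult (T x)) y = inner (imult x) (radj T y)"
      by (simp add: bclI[OF T, symmetric] radj[OF bl])
    then show "cinner (T x) y = cinner x (radj T y)"
      by (simp add: cinner_def radj[OF bl])
  qed
  have U: "S = radj T" if "\<forall>x y. cinner (T x) y = cinner x (S y)" for S
  proof (rule radj_unique[OF bl])
    fix x y
    have "cinner (T x) y = cinner x (S y)" using that by blast
    then show "inner (T x) y = inner x (S y)" by (simp add: cinner_def)
  qed
  show ?thesis unfolding cadj_def using P U by (rule the_equality)
qed

lemma cadj_bcl:
  assumes T: "bounded_clinear_op T"
  shows "bounded_clinear_op (cadj T)"
  using radj_bl[OF bclD[OF T]] radj_imult[OF T] by (simp add: cadj_eq[OF T] bounded_clinear_op_def)

lemma cadj_inner: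
  assumes T: "bounded_clinear_op T"
  shows "inner (T x) y = inner x (cadj T y)"
  by (simp add: cadj_eq[OF T] radj[OF bclD[OF T]])

lemma cadj_unique:
  assumes T: "bounded_clinear_op T" and S: "\<And>x y. inner (T x) y = inner x (S y)"
  shows "cadj T = S"
  using radj_unique[OF bclD[OF T] S] cadj_eq[OF T] by simp


definition symop :: "('a::real_inner \<Rightarrow> 'a) \<Rightarrow> bool" where
  "symop D \<longleftrightarrow> (\<forall>x y. inner (D x) y = inner x (D y))"

definition posop :: "('a::real_inner \<Rightarrow> 'a) \<Rightarrow> bool" where
  "posop D \<longleftrightarrow> (\<forall>x. 0 \<le> inner (D x) x)"

lemma numrad:
  fixes D :: "'a::real_inner \<Rightarrow> 'a"
  assumes D: "bounded_linear D" and S: "symop D"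
    and m: "\<And>u. \<bar>inner (D u) u\<bar> \<le> m * norm u ^ 2"
  shows "norm (D x) \<le> m * norm x"
proof -
  interpret bounded_linear D by fact
  have key: "4 * inner (D x) y \<le> 2 * m * (norm x ^ 2 + norm y ^ 2)" for x y
  proof -
    have "4 * inner (D x) y = inner (D (x + y)) (x + y) - inner (D (x - y)) (x - y)"
      using S unfolding symop_def
      by (simp add: add diff inner_add_left inner_add_right inner_diff_left inner_diff_right inner_commute)
    also have "\<dots> \<le> m * norm (x + y) ^ 2 + m * norm (x - y) ^ 2"
      using m[of "x + y"] m[of "x - y"] by (simp add: abs_le_iff)
    also have "\<dots> = 2 * m * (norm x ^ 2 + norm y ^ 2)"
      unfolding power2_norm_eq_inner
      by (simp add: algebra_simps inner_add_left inner_add_right inner_diff_left inner_diff_right inner_commute)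
    finally show ?thesis .
  qed
  show ?thesis
  proof (cases "D x = 0")
    case True
    show ?thesis
    proof (cases "x = 0")
      case False
      then have "0 < norm x ^ 2" by simp
      moreover have "0 \<le> m * norm x ^ 2" using m[of x] by (auto intro: order_trans)
      ultimately have "0 \<le> m" by (simp add: zero_le_mult_iff)
      then show ?thesis using True by simp
    qed (use True in simp)
  next
    case False
    define y where "y = (norm x / norm (D x)) *\<^sub>R D x"
    have ny: "norm y = norm x" using False by (simp add: y_def)
    have "inner (D x) y = norm x * norm (D x)"
      using False by (simp add: y_def power2_norm_eq_inner[symmetric] power2_eq_square)
    then have "4 * (norm x * norm (D x)) \<le> 2 * m * (norm x ^ 2 + norm x ^ 2)"
      using key[of x y] ny by simp
    then have "norm x * norm (D x) \<le> norm x * (m * norm x)"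
      by (simp add: power2_eq_square algebra_simps)
    moreover have "x \<noteq> 0" using False zero by auto
    ultimately show ?thesis by simp
  qed
qed

lemma quad_disc:
  fixes a b c :: real
  assumes q: "\<And>t. 0 \<le> a + 2 * t * b + t^2 * c" and c: "0 \<le> c"
  shows "b^2 \<le> a * c"
proof (cases "c = 0")
  case True
  show ?thesis
  proof (cases "b = 0")
    case False
    have "0 \<le> a + 2 * (- (a + 1) / (2 * b)) * b" using q[of "- (a + 1) / (2 * b)"] True by simp
    then show ?thesis using False by (simp add: field_simps)
  qed (use True q[of 0] in simp)
next
  case False
  then have c0: "c > 0" using c by simp
  have "0 \<le> a + 2 * (- b / c) * b + (- b / c)^2 * c" by (rule q)
  also have "\<dots> = a - b^2 / c" using c0 by (simp add: field_simps power2_eq_square)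
  finally show ?thesis using c0 by (simp add: field_simps)
qed

lemma pos_cs:
  fixes D :: "'a::real_inner \<Rightarrow> 'a"
  assumes D: "bounded_linear D" and S: "symop D" and P: "posop D"
    and K: "\<And>u. norm (D u) \<le> K * norm u"
  shows "norm (D x) ^ 2 \<le> K * inner (D x) x"
proof -
  interpret bounded_linear D by fact
  let ?z = "D x"
  have q: "0 \<le> inner (D x) x + 2 * t * inner (D x) ?z + t^2 * inner (D ?z) ?z" for t
  proof -
    have "0 \<le> inner (D (x + t *\<^sub>R ?z)) (x + t *\<^sub>R ?z)" using P by (simp add: posop_def)
    also have "\<dots> = inner (D x) x + 2 * t * inner (D x) ?z + t^2 * inner (D ?z) ?z"
      using S unfolding symop_def
      by (simp add: add scale inner_add_left inner_add_right power2_eq_square algebra_simps)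
    finally show ?thesis .
  qed
  have c: "0 \<le> inner (D ?z) ?z" using P by (simp add: posop_def)
  have "(norm (D x) ^ 2) ^ 2 \<le> inner (D x) x * inner (D ?z) ?z"
    using quad_disc[OF q c] by (simp add: power2_norm_eq_inner)
  also have "\<dots> \<le> inner (D x) x * (K * norm (D x) ^ 2)"
  proof (rule mult_left_mono)
    have "inner (D ?z) ?z \<le> norm (D ?z) * norm ?z" by (rule norm_cauchy_schwarz)
    also have "\<dots> \<le> K * norm ?z * norm ?z" using K[of ?z] by (simp add: mult_right_mono)
    finally show "inner (D ?z) ?z \<le> K * norm (D x) ^ 2" by (simp add: power2_eq_square)
    show "0 \<le> inner (D x) x" using P by (simp add: posop_def)
  qed
  finally have h: "norm (D x) ^ 2 * norm (D x) ^ 2 \<le> (K * inner (D x) x) * norm (D x) ^ 2"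
    by (simp add: power2_eq_square algebra_simps)
  show ?thesis
  proof (cases "D x = 0")
    case True
    then show ?thesis using K[of x] P by (simp add: posop_def)
  next
    case False
    then have "0 < norm (D x) ^ 2" by simp
    then show ?thesis using h by (rule mult_right_le_imp_le[rotated])
  qed
qed

lemma symop_from_im:
  assumes A: "bounded_clinear_op A" and im: "\<And>x. inner (imult (A x)) x = 0"
  shows "symop (A :: 'a::complex_hilbert \<Rightarrow> 'a)"
  unfolding symop_def
proof (intro allI)
  fix x y
  have bl: "bounded_linear A" using A by (rule bclD)
  interpret bounded_linear A by fact
  interpret I: linear imult by (rule imult_linear)
  have anti: "inner (imult (A u)) v = - inner (imult (A v)) u" for u v
  proof -
    have "0 = inner (imult (A (u + v))) (u + v)" by (rule im[symmetric])
    also have "\<dots> = inner (imult (A u)) v + inner (imult (A v)) u"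
      using im[of u] im[of v] by (simp add: add I.add inner_add_left inner_add_right)
    finally show ?thesis by simp
  qed
  have "inner (A x) y = inner (imult (A x)) (imult y)" by (simp add: inner_imult)
  also have "\<dots> = - inner (imult (A (imult y))) x" by (rule anti)
  also have "\<dots> = inner (A y) x" by (simp add: bclI[OF A] imult_imult)
  finally show "inner (A x) y = inner x (A y)" by (simp add: inner_commute)
qed


definition sc :: "nat \<Rightarrow> real" where
  "sc k = ((1/2) gchoose k) * (-1)^k"

lemma sc0[simp]: "sc 0 = 1" by (simp add: sc_def)

lemma sc_rec: "real (Suc k) * sc (Suc k) = (real k - 1/2) * sc k"
proof -
  have "(1/2::real) * ((1/2) gchoose k) = real k * ((1/2) gchoose k) + real (Suc k) * ((1/2) gchoose (Suc k))"
    by (rule gbinomial_mult_1)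
  then have "real (Suc k) * ((1/2) gchoose (Suc k)) = (1/2 - real k) * ((1/2) gchoose k)"
    by (simp add: algebra_simps)
  note h = this
  have "real (Suc k) * sc (Suc k) = - ((-1)^k * (real (Suc k) * ((1/2) gchoose (Suc k))))"
    by (simp add: sc_def)
  also have "\<dots> = - ((-1)^k * ((1/2 - real k) * ((1/2) gchoose k)))" by (simp only: h)
  also have "\<dots> = (real k - 1/2) * sc k" by (simp add: sc_def algebra_simps)
  finally show ?thesis .
qed

lemma sc_nonpos: "k \<ge> 1 \<Longrightarrow> sc k \<le> 0"
proof (induction k rule: dec_induct)
  case base
  then show ?case by (simp add: sc_def)
next
  case (step n)
  have "real (Suc n) * sc (Suc n) \<le> 0"
    unfolding sc_rec using step by (intro mult_nonneg_nonpos) auto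
  then show ?case by (simp add: mult_le_0_iff)
qed

lemma sc_partial: "(\<Sum>k\<le>n. sc k) = (1 - 2 * real n) * sc n"
proof (induction n)
  case 0 then show ?case by simp
next
  case (Suc n)
  have "(\<Sum>k\<le>Suc n. sc k) = (1 - 2 * real n) * sc n + sc (Suc n)" using Suc by simp
  also have "(1 - 2 * real n) * sc n = - 2 * (real (Suc n) * sc (Suc n))"
    unfolding sc_rec by (simp add: algebra_simps)
  finally show ?case by (simp add: algebra_simps)
qed

lemma sc_partial_nonneg: "0 \<le> (\<Sum>k\<le>n. sc k)"
proof (cases "n = 0")
  case False
  then show ?thesis unfolding sc_partial using sc_nonpos[of n]
    by (intro mult_nonpos_nonpos) auto
qed simp

lemma sc_abs_partial: "(\<Sum>k<Suc n. \<bar>sc k\<bar>) = 2 - (\<Sum>k\<le>n. sc k)"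
proof (induction n)
  case 0 then show ?case by simp
next
  case (Suc n)
  have "\<bar>sc (Suc n)\<bar> = - sc (Suc n)" using sc_nonpos[of "Suc n"] by simp
  then show ?case using Suc by simp
qed

lemma sc_abs_bound: "(\<Sum>k<n. \<bar>sc k\<bar>) \<le> 2"
proof (cases n)
  case (Suc m)
  then show ?thesis using sc_abs_partial[of m] sc_partial_nonneg[of m] by simp
qed simp

lemma sc_abs_summable: "summable (\<lambda>k. \<bar>sc k\<bar>)"
  by (rule summableI_nonneg_bounded[of _ 2]) (auto intro: sc_abs_bound)

lemma sc_conv: "(\<Sum>i\<in>{0..n}. sc i * sc (n - i)) = (if n = 0 then 1 else if n = 1 then -1 else 0)"
proof -
  have "(\<Sum>i\<in>{0..n}. sc i * sc (n - i)) = (\<Sum>i\<in>{0..n}. ((1/2::real) gchoose i) * ((1/2) gchoose (n - i))) * (-1)^n"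
    unfolding sum_distrib_right
  proof (rule sum.cong)
    fix i assume "i \<in> {0..n}"
    then have "(-1::real)^i * (-1)^(n-i) = (-1)^n" by (simp add: power_add[symmetric])
    then show "sc i * sc (n - i) = ((1/2::real) gchoose i) * ((1/2) gchoose (n - i)) * (-1)^n"
      unfolding sc_def by (metis (no_types, lifting) mult.assoc mult.left_commute)
  qed simp
  also have "\<dots> = ((1::real) gchoose n) * (-1)^n"
    using gbinomial_Vandermonde[of "1/2::real" "1/2" n] by simp
  also have "((1::real) gchoose n) = real (1 choose n)"
    using binomial_gbinomial[of 1 n, where 'a=real] by simp
  finally show ?thesis
    by (cases n; cases "n - 1") (auto simp: binomial_eq_0)
qed


subclass (in complex_hilbert) banach ..

lemma bcl_comp': "bounded_clinear_op S \<Longrightarrow> bounded_clinear_op T \<Longrightarrow> bounded_clinear_op (\<lambda>x. S (T x))"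
  unfolding bounded_clinear_op_def by (auto intro: bounded_linear_compose)

lemma bcl_comp: "bounded_clinear_op S \<Longrightarrow> bounded_clinear_op T \<Longrightarrow> bounded_clinear_op (S \<circ> T)"
  unfolding comp_def by (rule bcl_comp')

lemma bcl_id': "bounded_clinear_op (\<lambda>x::'a::complex_hilbert. x)"
  by (simp add: bounded_clinear_op_def bounded_linear_ident)

lemma bcl_id: "bounded_clinear_op (id :: 'a::complex_hilbert \<Rightarrow> 'a)"
  unfolding id_def by (rule bcl_id')

locale contr =
  fixes C :: "'a::complex_hilbert \<Rightarrow> 'a"
  assumes bcl: "bounded_clinear_op C" and sym: "symop C" and pos: "posop C"
    and le1: "\<And>x. inner (C x) x \<le> inner x x"
begin

lemma bl: "bounded_linear C" using bcl by (rule bclD)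

lemma normC: "norm (C x) \<le> norm x"
proof -
  have "norm (C x) \<le> 1 * norm x"
  proof (rule numrad[OF bl sym])
    fix u
    show "\<bar>inner (C u) u\<bar> \<le> 1 * norm u ^ 2"
      using le1[of u] pos by (simp add: posop_def power2_norm_eq_inner)
  qed
  then show ?thesis by simp
qed

lemma Cp_bcl: "bounded_clinear_op (C ^^ k)"
  by (induction k) (auto simp: bcl_id' bcl_comp' bcl)

lemma Cp_bl: "bounded_linear (C ^^ k)"
  using Cp_bcl by (rule bclD)

lemma Cp_norm: "norm ((C ^^ k) x) \<le> norm x"
  by (induction k) (auto intro: order_trans[OF normC])

lemma Cp_sym: "inner ((C ^^ k) x) y = inner x ((C ^^ k) y)"
proof (induction k arbitrary: x y)
  case (Suc k)
  have "inner ((C ^^ Suc k) x) y = inner ((C ^^ k) x) (C y)"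
    using sym by (simp add: symop_def)
  also have "\<dots> = inner x ((C ^^ k) (C y))" by (rule Suc)
  also have "(C ^^ k) (C y) = (C ^^ Suc k) y" by (simp add: funpow_swap1)
  finally show ?case .
qed simp

lemma Cp_add: "(C ^^ j) ((C ^^ k) x) = (C ^^ (j + k)) x"
  by (simp add: funpow_add)

definition R :: "'a \<Rightarrow> 'a" where
  "R x = (\<Sum>k. sc k *\<^sub>R (C ^^ k) x)"

lemma term_norm: "norm (sc k *\<^sub>R (C ^^ k) x) \<le> \<bar>sc k\<bar> * norm x"
  by (simp add: mult_left_mono Cp_norm)

lemma R_norm_summable: "summable (\<lambda>k. norm (sc k *\<^sub>R (C ^^ k) x))"
  by (rule summable_comparison_test[OF _ summable_mult2[OF sc_abs_summable, of "norm x"]])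
     (use term_norm in auto)

lemma R_summable: "summable (\<lambda>k. sc k *\<^sub>R (C ^^ k) x)"
  by (rule summable_norm_cancel[OF R_norm_summable[of x]])

lemma R_apply_bl:
  assumes h: "bounded_linear h"
  shows "h (R x) = (\<Sum>k. h (sc k *\<^sub>R (C ^^ k) x))"
  unfolding R_def by (rule bounded_linear.suminf[OF h R_summable])

lemma R_add: "R (x + y) = R x + R y"
proof -
  have "R (x + y) = (\<Sum>k. sc k *\<^sub>R (C ^^ k) x + sc k *\<^sub>R (C ^^ k) y)"
    unfolding R_def by (simp add: linear_add[OF bounded_linear.linear[OF Cp_bl]] scaleR_add_right)
  also have "\<dots> = R x + R y" unfolding R_def by (rule suminf_add[OF R_summable R_summable, symmetric])
  finally show ?thesis .
qed

lemma R_scale: "R (r *\<^sub>R x) = r *\<^sub>R R x"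
proof -
  have "R (r *\<^sub>R x) = (\<Sum>k. r *\<^sub>R (sc k *\<^sub>R (C ^^ k) x))"
    unfolding R_def by (simp add: linear_scale[OF bounded_linear.linear[OF Cp_bl]] mult.commute)
  also have "\<dots> = r *\<^sub>R R x"
    using R_apply_bl[OF bounded_linear_scaleR_right, of r x] by (simp add: mult.commute)
  finally show ?thesis .
qed

lemma R_bound: "norm (R x) \<le> (\<Sum>k. \<bar>sc k\<bar>) * norm x"
proof -
  have "norm (R x) \<le> (\<Sum>k. norm (sc k *\<^sub>R (C ^^ k) x))"
    unfolding R_def by (rule summable_norm[OF R_norm_summable[of x]])
  also have "\<dots> \<le> (\<Sum>k. \<bar>sc k\<bar> * norm x)"
    by (rule suminf_le[OF term_norm R_norm_summable[of x] summable_mult2[OF sc_abs_summable]])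
  also have "\<dots> = (\<Sum>k. \<bar>sc k\<bar>) * norm x" by (rule suminf_mult2[OF sc_abs_summable, symmetric])
  finally show ?thesis .
qed

lemma R_bl: "bounded_linear R"
  by (rule bounded_linear_intro[OF R_add R_scale, of "\<Sum>k. \<bar>sc k\<bar>"]) (metis R_bound mult.commute)

lemma R_imult: "R (imult x) = imult (R x)"
proof -
  have "imult (R x) = (\<Sum>k. imult (sc k *\<^sub>R (C ^^ k) x))" by (rule R_apply_bl[OF imult_bl])
  also have "\<dots> = R (imult x)"
    unfolding R_def by (simp add: imult_scaleR bclI[OF Cp_bcl])
  finally show ?thesis by simp
qed

lemma R_bcl: "bounded_clinear_op R"
  by (simp add: bounded_clinear_op_def R_bl R_imult)

lemma R_sym: "symop R"
  unfolding symop_def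
proof (intro allI)
  fix x y
  have "inner (R x) y = (\<Sum>k. inner (sc k *\<^sub>R (C ^^ k) x) y)"
    by (rule R_apply_bl[OF bounded_linear_inner_left])
  also have "\<dots> = (\<Sum>k. inner x (sc k *\<^sub>R (C ^^ k) y))" by (simp add: Cp_sym)
  also have "\<dots> = inner x (R y)"
    by (rule R_apply_bl[OF bounded_linear_inner_right, symmetric])
  finally show "inner (R x) y = inner x (R y)" .
qed

lemma R_pos: "posop R"
  unfolding posop_def
proof
  fix x
  let ?f = "\<lambda>k. inner (sc k *\<^sub>R (C ^^ k) x) x"
  have eq: "inner (R x) x = (\<Sum>k. ?f k)"
    by (rule R_apply_bl[OF bounded_linear_inner_left])
  have sm: "summable ?f"
    using bounded_linear.summable[OF bounded_linear_inner_left R_summable] .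
  have tf: "sc k * inner x x \<le> ?f k" for k
  proof (cases "k = 0")
    case False
    have "inner ((C ^^ k) x) x \<le> norm ((C ^^ k) x) * norm x" by (rule norm_cauchy_schwarz)
    also have "\<dots> \<le> inner x x" using Cp_norm[of k x]
      by (simp add: power2_norm_eq_inner[symmetric] power2_eq_square mult_right_mono)
    finally show ?thesis using sc_nonpos[of k] False
      by (simp add: mult_left_mono_neg)
  qed simp
  have "0 \<le> (\<Sum>k<n. ?f k)" for n
  proof (cases n)
    case (Suc m)
    have "0 \<le> (\<Sum>k\<le>m. sc k) * inner x x" using sc_partial_nonneg by simp
    also have "\<dots> = (\<Sum>k<n. sc k * inner x x)" using Suc by (simp add: sum_distrib_right lessThan_Suc_atMost)
    also have "\<dots> \<le> (\<Sum>k<n. ?f k)" by (rule sum_mono[OF tf])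
    finally show ?thesis .
  qed simp
  then have "0 \<le> (\<Sum>k. ?f k)"
    using summable_LIMSEQ[OF sm] by (intro LIMSEQ_le_const) auto
  then show "0 \<le> inner (R x) x" using eq by simp
qed

end


context contr begin

lemma abs_sc_has_sum: "((\<lambda>k. \<bar>sc k\<bar>) has_sum (\<Sum>k. \<bar>sc k\<bar>)) UNIV"
  using norm_summable_imp_has_sum[of "\<lambda>k. \<bar>sc k\<bar>"] sc_abs_summable
  by (simp add: summable_sums)

lemma R_has_sum: "((\<lambda>k. sc k *\<^sub>R (C ^^ k) x) has_sum R x) UNIV"
  unfolding R_def
  by (rule norm_summable_imp_has_sum[OF R_norm_summable summable_sums[OF R_summable]])

lemma G_summable: "(\<lambda>(j,k). \<bar>sc j\<bar> * \<bar>sc k\<bar> * a) summable_on (UNIV \<times> UNIV)" if "0 \<le> a"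
proof (rule summable_on_SigmaI[where g = "\<lambda>j. \<bar>sc j\<bar> * ((\<Sum>k. \<bar>sc k\<bar>) * a)"])
  fix j :: nat
  show "((\<lambda>k. case (j, k) of (j, k) \<Rightarrow> \<bar>sc j\<bar> * \<bar>sc k\<bar> * a) has_sum \<bar>sc j\<bar> * ((\<Sum>k. \<bar>sc k\<bar>) * a)) UNIV"
    using has_sum_cmult_right[OF has_sum_cmult_left[OF abs_sc_has_sum, of a], of "\<bar>sc j\<bar>"]
    by (simp add: mult_ac)
next
  show "(\<lambda>j. \<bar>sc j\<bar> * ((\<Sum>k. \<bar>sc k\<bar>) * a)) summable_on UNIV"
    using has_sum_cmult_left[OF abs_sc_has_sum] by (auto simp: summable_on_def)
next
  fix j k :: nat
  show "0 \<le> (case (j, k) of (j, k) \<Rightarrow> \<bar>sc j\<bar> * \<bar>sc k\<bar> * a)" using that by simp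
qed

lemma F_summable: "(\<lambda>(j,k). (sc j * sc k) *\<^sub>R (C ^^ (j + k)) x) summable_on (UNIV \<times> UNIV)"
proof (rule abs_summable_summable)
  have Gs: "(\<lambda>p. norm ((\<lambda>(j,k). \<bar>sc j\<bar> * \<bar>sc k\<bar> * norm x) p)) summable_on (UNIV \<times> UNIV)"
    using G_summable[of "norm x"] by (simp add: case_prod_unfold abs_mult)
  show "(\<lambda>p. norm ((\<lambda>(j,k). (sc j * sc k) *\<^sub>R (C ^^ (j + k)) x) p)) summable_on (UNIV \<times> UNIV)"
  proof (rule Infinite_Sum.abs_summable_on_comparison_test[OF Gs])
    fix p :: "nat \<times> nat"
    obtain j k where p: "p = (j, k)" by (cases p)
    have "norm ((sc j * sc k) *\<^sub>R (C ^^ (j + k)) x) \<le> \<bar>sc j\<bar> * \<bar>sc k\<bar> * norm x"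
      by (simp add: abs_mult mult_left_mono Cp_norm)
    then show "norm ((\<lambda>(j,k). (sc j * sc k) *\<^sub>R (C ^^ (j + k)) x) p) \<le> norm ((\<lambda>(j,k). \<bar>sc j\<bar> * \<bar>sc k\<bar> * norm x) p)"
      using p by simp
  qed
qed

lemma RR: "R (R x) = x - C x"
proof -
  define F where "F = (\<lambda>(j,k). (sc j * sc k) *\<^sub>R (C ^^ (j + k)) x)"
  have inner1: "((\<lambda>k. F (j, k)) has_sum sc j *\<^sub>R (C ^^ j) (R x)) UNIV" for j
  proof -
    have "((\<lambda>k. sc j *\<^sub>R (C ^^ j) (sc k *\<^sub>R (C ^^ k) x)) has_sum sc j *\<^sub>R (C ^^ j) (R x)) UNIV"
      by (rule has_sum_bounded_linear[OF bounded_linear_compose[OF bounded_linear_scaleR_right Cp_bl] R_has_sum])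
    moreover have "sc j *\<^sub>R (C ^^ j) (sc k *\<^sub>R (C ^^ k) x) = F (j, k)" for k
      by (simp add: F_def linear_scale[OF bounded_linear.linear[OF Cp_bl]] Cp_add)
    ultimately show ?thesis by simp
  qed
  have "R (R x) = infsum (\<lambda>j. sc j *\<^sub>R (C ^^ j) (R x)) UNIV"
    by (rule infsumI[OF R_has_sum, symmetric])
  also have "\<dots> = infsum (\<lambda>j. infsum (\<lambda>k. F (j, k)) UNIV) UNIV"
    by (rule infsum_cong) (rule infsumI[OF inner1, symmetric])
  also have "\<dots> = infsum F (UNIV \<times> UNIV)"
    by (rule infsum_Sigma_banach) (use F_summable in \<open>simp add: F_def\<close>)
  also have "\<dots> = infsum (\<lambda>p. F ((\<lambda>(n,i). (i, n - i)) p)) (SIGMA n:UNIV. {..n})"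
  proof (rule infsum_reindex_bij_betw[symmetric])
    show "bij_betw (\<lambda>(n,i). (i, n - i)) (SIGMA n:UNIV. {..n::nat}) (UNIV \<times> UNIV)"
      by (rule bij_betw_byWitness[where f' = "\<lambda>(j,k). (j + k, j)"]) auto
  qed
  also have "\<dots> = infsum (\<lambda>n. infsum (\<lambda>i. F ((\<lambda>(n,i). (i, n - i)) (n, i))) {..n}) UNIV"
  proof (rule infsum_Sigma_banach[symmetric])
    have bij: "bij_betw (\<lambda>(n,i). (i, n - i)) (SIGMA n:UNIV. {..n::nat}) (UNIV \<times> UNIV)"
      by (rule bij_betw_byWitness[where f' = "\<lambda>(j,k). (j + k, j)"]) auto
    have "(\<lambda>p. F ((\<lambda>(n,i). (i, n - i)) p)) summable_on (SIGMA n:UNIV. {..n}) \<longleftrightarrow> F summable_on (UNIV \<times> UNIV)"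
      by (rule summable_on_reindex_bij_betw[OF bij])
    moreover have "F summable_on (UNIV \<times> UNIV)" unfolding F_def by (rule F_summable)
    ultimately show "(\<lambda>p. F ((\<lambda>(n,i). (i, n - i)) p)) summable_on (SIGMA n:UNIV. {..n})" by blast
  qed
  also have "\<dots> = infsum (\<lambda>n. (if n = 0 then 1 else if n = 1 then -1 else 0) *\<^sub>R (C ^^ n) x) UNIV"
  proof (rule infsum_cong)
    fix n
    have "infsum (\<lambda>i. F ((\<lambda>(n,i). (i, n - i)) (n, i))) {..n} = (\<Sum>i\<le>n. (sc i * sc (n - i)) *\<^sub>R (C ^^ n) x)"
      by (simp add: F_def)
    also have "\<dots> = (\<Sum>i\<in>{0..n}. sc i * sc (n - i)) *\<^sub>R (C ^^ n) x"
      by (simp add: scaleR_sum_left atLeast0AtMost)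
    also have "\<dots> = (if n = 0 then 1 else if n = 1 then -1 else 0) *\<^sub>R (C ^^ n) x"
      by (simp only: sc_conv)
    finally show "infsum (\<lambda>i. F ((\<lambda>(n,i). (i, n - i)) (n, i))) {..n} = \<dots>" .
  qed
  also have "\<dots> = infsum (\<lambda>n. (if n = 0 then 1 else if n = 1 then -1 else 0) *\<^sub>R (C ^^ n) x) {0,1}"
    by (rule infsum_cong_neutral) auto
  also have "\<dots> = x - C x" by simp
  finally show ?thesis .
qed

end


lemma contr_commute:
  assumes c: "contr C" and Z: "bounded_linear Z" and ZC: "\<And>x. Z (C x) = C (Z x)"
  shows "Z (contr.R C x) = contr.R C (Z x)"
proof -
  interpret contr C by fact
  have Zp: "Z ((C ^^ k) y) = (C ^^ k) (Z y)" for k y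
    by (induction k) (auto simp: ZC)
  have "Z (R x) = (\<Sum>k. Z (sc k *\<^sub>R (C ^^ k) x))" by (rule R_apply_bl[OF Z])
  also have "\<dots> = R (Z x)" unfolding R_def
    by (simp add: Zp linear_scale[OF bounded_linear.linear[OF Z]])
  finally show ?thesis .
qed

lemma pos_zero:
  assumes D: "bounded_linear D" and S: "symop D" and P: "posop D" and z: "inner (D y) y = 0"
  shows "D y = 0"
proof -
  obtain K where K: "\<And>x. norm (D x) \<le> norm x * K" using bounded_linear.bounded[OF D] by blast
  have "norm (D y) ^ 2 \<le> K * inner (D y) y"
    by (rule pos_cs[OF D S P]) (metis K mult.commute)
  then show ?thesis using z by simp
qed

lemma sqrt_exists:
  fixes B :: "'a::complex_hilbert \<Rightarrow> 'a"
  assumes B: "bounded_clinear_op B" and SB: "symop B" and PB: "posop B"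
  shows "\<exists>A. bounded_clinear_op A \<and> symop A \<and> posop A \<and> (\<forall>x. A (A x) = B x) \<and>
      (\<forall>Z. bounded_linear Z \<and> (\<forall>x. Z (B x) = B (Z x)) \<longrightarrow> (\<forall>x. Z (A x) = A (Z x)))"
proof -
  have Bbl: "bounded_linear B" using B by (rule bclD)
  interpret Bb: bounded_linear B by fact
  define \<beta> where "\<beta> = onorm B + 1"
  have \<beta>: "0 < \<beta>" using onorm_pos_le[OF Bbl] by (simp add: \<beta>_def)
  define C where "C x = x - (1 / \<beta>) *\<^sub>R B x" for x
  have Cbcl: "bounded_clinear_op C"
  proof -
    have "bounded_linear C" unfolding C_def
      by (intro bounded_linear_sub bounded_linear_ident bounded_linear_compose[OF bounded_linear_scaleR_right Bbl])
    then show ?thesis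
      by (simp add: bounded_clinear_op_def C_def imult_minus imult_scaleR bclI[OF B])
  qed
  have Bin: "inner (B x) x \<le> \<beta> * inner x x" for x
  proof -
    have "inner (B x) x \<le> norm (B x) * norm x" by (rule norm_cauchy_schwarz)
    also have "\<dots> \<le> onorm B * norm x * norm x" by (intro mult_right_mono onorm[OF Bbl]) auto
    also have "\<dots> \<le> \<beta> * inner x x"
      by (simp add: \<beta>_def power2_norm_eq_inner[symmetric] power2_eq_square algebra_simps)
    finally show ?thesis .
  qed
  have c: "contr C"
  proof
    show "bounded_clinear_op C" by (rule Cbcl)
    show "symop C" using SB
      by (simp add: symop_def C_def inner_diff_left inner_diff_right)
    show "posop C" unfolding posop_def
    proof
      fix x
      have "inner (B x) x / \<beta> \<le> inner x x" using Bin[of x] \<beta> by (simp add: divide_le_eq mult.commute)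
      then show "0 \<le> inner (C x) x" by (simp add: C_def inner_diff_left)
    qed
    fix x
    show "inner (C x) x \<le> inner x x" using PB \<beta>
      by (simp add: C_def inner_diff_left posop_def)
  qed
  interpret contr C by (rule c)
  define A where "A x = sqrt \<beta> *\<^sub>R R x" for x
  show ?thesis
  proof (intro exI[of _ A] conjI allI impI)
    have "bounded_linear A" unfolding A_def
      by (rule bounded_linear_compose[OF bounded_linear_scaleR_right R_bl])
    then show "bounded_clinear_op A"
      using R_imult by (auto simp: bounded_clinear_op_def A_def imult_scaleR)
    show "symop A" using R_sym by (simp add: symop_def A_def)
    show "posop A" using R_pos \<beta> by (simp add: posop_def A_def)
    fix x
    have "A (A x) = \<beta> *\<^sub>R R (R x)"
      using \<beta> by (simp add: A_def linear_scale[OF bounded_linear.linear[OF R_bl]])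
    also have "\<dots> = B x" using \<beta> by (simp add: RR C_def)
    finally show "A (A x) = B x" .
  next
    fix Z x assume Z: "bounded_linear Z \<and> (\<forall>x. Z (B x) = B (Z x))"
    have ZC: "Z (C y) = C (Z y)" for y
      using Z by (simp add: C_def linear_diff[OF bounded_linear.linear] linear_scale[OF bounded_linear.linear])
    have Zbl: "bounded_linear Z" using Z by blast
    show "Z (A x) = A (Z x)"
      using contr_commute[OF c Zbl ZC] Zbl by (simp add: A_def linear_scale[OF bounded_linear.linear])
  qed
qed

lemma sqrt_unique:
  fixes B :: "'a::complex_hilbert \<Rightarrow> 'a"
  assumes B: "bounded_clinear_op B" and SB: "symop B" and PB: "posop B"
  obtains S where "bounded_clinear_op S" "symop S" "posop S" "\<And>x. S (S x) = B x"
    "\<And>A. bounded_clinear_op A \<Longrightarrow> symop A \<Longrightarrow> posop A \<Longrightarrow> (\<And>x. A (A x) = B x) \<Longrightarrow> A = S"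
proof -
  obtain S where S: "bounded_clinear_op S" "symop S" "posop S" "\<And>x. S (S x) = B x"
    and com: "\<forall>Z. bounded_linear Z \<and> (\<forall>x. Z (B x) = B (Z x)) \<longrightarrow> (\<forall>x. Z (S x) = S (Z x))"
    using sqrt_exists[OF B SB PB] by blast
  have U: "A = S" if A: "bounded_clinear_op A" "symop A" "posop A" "\<And>x. A (A x) = B x" for A
  proof
    fix x
    have Abl: "bounded_linear A" using A(1) by (rule bclD)
    have Sbl: "bounded_linear S" using S(1) by (rule bclD)
    interpret Al: bounded_linear A by fact
    interpret Sl: bounded_linear S by fact
    have AB: "\<forall>z. A (B z) = B (A z)" using A(4) by metis
    have AS: "A (S z) = S (A z)" for z
      using com Abl AB by blast
    define y where "y = A x - S x"
    have "A y + S y = 0"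
      by (simp add: y_def Al.diff Sl.diff A(4) S(4) AS)
    then have "inner (A y) y + inner (S y) y = 0" by (simp add: inner_add_left[symmetric])
    moreover have "0 \<le> inner (A y) y" "0 \<le> inner (S y) y" using A(3) S(3) by (auto simp: posop_def)
    ultimately have "inner (A y) y = 0" "inner (S y) y = 0" by linarith+
    then have "A y = 0" "S y = 0"
      using pos_zero[OF Abl A(2) A(3)] pos_zero[OF Sbl S(2) S(3)] by auto
    have "inner y y = inner x (A y) - inner x (S y)"
      using A(2) S(2) unfolding symop_def y_def by (simp add: inner_diff_left)
    then have "inner y y = 0" using \<open>A y = 0\<close> \<open>S y = 0\<close> by simp
    then show "A x = S x" by (simp add: y_def)
  qed
  show ?thesis using S U that by blast
qed

lemma op_abs_props:
  fixes T :: "'a::complex_hilbert \<Rightarrow> 'a"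
  assumes T: "bounded_clinear_op T"
  shows "bounded_clinear_op (op_abs T)" "symop (op_abs T)" "posop (op_abs T)"
    "\<And>x. op_abs T (op_abs T x) = cadj T (T x)"
proof -
  let ?B = "\<lambda>x. cadj T (T x)"
  have Bb: "bounded_clinear_op ?B" by (rule bcl_comp'[OF cadj_bcl[OF T] T])
  have SB: "symop ?B"
    unfolding symop_def
  proof (intro allI)
    fix x y
    have "inner (cadj T (T x)) y = inner (T y) (T x)"
      by (subst inner_commute) (rule cadj_inner[OF T, symmetric])
    also have "\<dots> = inner x (cadj T (T y))"
      by (subst inner_commute) (rule cadj_inner[OF T])
    finally show "inner (cadj T (T x)) y = inner x (cadj T (T y))" .
  qed
  have PB: "posop ?B"
    unfolding posop_def
  proof
    fix x
    have "inner (cadj T (T x)) x = inner (T x) (T x)"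
      by (subst inner_commute) (rule cadj_inner[OF T, symmetric])
    then show "0 \<le> inner (cadj T (T x)) x" by simp
  qed
  obtain S where S: "bounded_clinear_op S" "symop S" "posop S" "\<And>x. S (S x) = ?B x"
    and U: "\<And>A. bounded_clinear_op A \<Longrightarrow> symop A \<Longrightarrow> posop A \<Longrightarrow> (\<And>x. A (A x) = ?B x) \<Longrightarrow> A = S"
    using sqrt_unique[OF Bb SB PB] by metis
  let ?P = "\<lambda>A. bounded_clinear_op A \<and> (\<forall>x. Im (cinner (A x) x) = 0 \<and> 0 \<le> Re (cinner (A x) x))
                 \<and> (\<forall>x. A (A x) = cadj T (T x))"
  have PS: "?P S"
  proof (intro conjI allI)
    show "bounded_clinear_op S" by (rule S(1))
    fix x
    have "inner (imult (S x)) x = inner (S (imult x)) x" by (simp add: bclI[OF S(1)])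
    also have "\<dots> = inner (imult x) (S x)" using S(2) by (simp add: symop_def)
    also have "\<dots> = - inner (imult (S x)) x" by (simp add: inner_imult_left inner_commute)
    finally have "inner (imult (S x)) x = 0" by simp
    then show "Im (cinner (S x) x) = 0" by (simp add: cinner_def)
    show "0 \<le> Re (cinner (S x) x)" using S(3) by (simp add: cinner_def posop_def)
    show "S (S x) = cadj T (T x)" by (rule S(4))
  qed
  have "A = S" if "?P A" for A
  proof (rule U)
    show "bounded_clinear_op A" using that by blast
    show "symop A"
      by (rule symop_from_im) (use that in \<open>auto simp: cinner_def\<close>)
    show "posop A" using that by (auto simp: posop_def cinner_def)
    show "A (A x) = cadj T (T x)" for x using that by blast
  qed
  note uq = this
  have "op_abs T = S" unfolding op_abs_def
    by (rule the_equality[where P = ?P, OF PS]) (rule uq)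
  then show "bounded_clinear_op (op_abs T)" "symop (op_abs T)" "posop (op_abs T)"
    "\<And>x. op_abs T (op_abs T x) = cadj T (T x)" using S by auto
qed


lemma subspace_closure':
  fixes S :: "'a::real_normed_vector set"
  assumes "subspace S" shows "subspace (closure S)"
  unfolding subspace_def
proof (intro conjI ballI allI)
  show "0 \<in> closure S" using assms closure_subset subspace_0 by blast
next
  fix x y assume "x \<in> closure S" "y \<in> closure S"
  then obtain f g where f: "\<And>n. f n \<in> S" "f \<longlonglongrightarrow> x" and g: "\<And>n. g n \<in> S" "g \<longlonglongrightarrow> y"
    by (meson closure_sequential)
  have "(\<lambda>n. f n + g n) \<longlonglongrightarrow> x + y" by (intro tendsto_intros f g)
  moreover have "\<And>n. f n + g n \<in> S" using f g assms by (simp add: subspace_add)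
  ultimately show "x + y \<in> closure S" by (meson closure_sequential)
next
  fix c :: real and x assume "x \<in> closure S"
  then obtain f where f: "\<And>n. f n \<in> S" "f \<longlonglongrightarrow> x" by (meson closure_sequential)
  have "(\<lambda>n. c *\<^sub>R f n) \<longlonglongrightarrow> c *\<^sub>R x" by (intro tendsto_intros f)
  moreover have "\<And>n. c *\<^sub>R f n \<in> S" using f assms by (simp add: subspace_scale)
  ultimately show "c *\<^sub>R x \<in> closure S" by (meson closure_sequential)
qed

definition projop :: "('a::real_inner \<Rightarrow> 'a) \<Rightarrow> bool" where
  "projop P \<longleftrightarrow> bounded_linear P \<and> symop P \<and> (\<forall>x. P (P x) = P x)"

lemma projop_orth:
  assumes "projop P" shows "inner (P x) (y - P y) = 0"
proof -
  have "inner (P x) (y - P y) = inner x (P y - P (P y))"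
    using assms by (simp add: projop_def symop_def inner_diff_right linear_diff[OF bounded_linear.linear])
  then show ?thesis using assms by (simp add: projop_def)
qed

lemma projop_pyth:
  assumes "projop P" shows "norm x ^ 2 = norm (P x) ^ 2 + norm (x - P x) ^ 2"
proof -
  have "norm (P x + (x - P x)) ^ 2 = norm (P x) ^ 2 + norm (x - P x) ^ 2"
    by (rule norm_add_Pythagorean) (simp add: orthogonal_def projop_orth[OF assms])
  then show ?thesis by simp
qed

lemma projop_norm: "projop P \<Longrightarrow> norm (P x) \<le> norm x"
proof -
  assume "projop P"
  note h = projop_pyth[OF this, of x]
  have "0 \<le> norm (x - P x) ^ 2" by (rule zero_le_power2)
  with h have "norm (P x) ^ 2 \<le> norm x ^ 2" by linarith
  then show ?thesis by (rule power2_le_imp_le) (rule norm_ge_zero)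
qed

lemma projop_range: "projop P \<Longrightarrow> range P = {x. P x = x}"
  unfolding projop_def by (metis (mono_tags, lifting) image_iff mem_Collect_eq rangeI subsetI subset_antisym)

lemma projop_inner_self: "projop P \<Longrightarrow> inner (P x) x = norm (P x) ^ 2"
  using projop_orth[of P x x] by (simp add: power2_norm_eq_inner inner_diff_right)

lemma ortho_ker_ran:
  assumes "projop P" "P v = v" "P k = 0" shows "inner v k = 0"
  using projop_orth[OF assms(1), of v k] assms(2,3) by simp


lemma pi_facts:
  assumes X: "X \<in> partial_isometries"
  shows "bounded_clinear_op X" "\<And>x. X (cadj X (X x)) = X x"
    "projop (\<lambda>x. cadj X (X x))"
    "\<And>x. norm (X x) ^ 2 = norm (cadj X (X x)) ^ 2"
    "\<And>x. norm (X x) \<le> norm x"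
    "\<And>x. cadj X (X x) = x \<Longrightarrow> norm (X x) = norm x"
proof -
  show Xb: "bounded_clinear_op X" and XX: "\<And>x. X (cadj X (X x)) = X x"
    using X by (auto simp: partial_isometries_def)
  have Xbl: "bounded_linear X" using Xb by (rule bclD)
  have Abl: "bounded_linear (cadj X)" using cadj_bcl[OF Xb] by (rule bclD)
  have sym: "symop (\<lambda>x. cadj X (X x))"
    unfolding symop_def
  proof (intro allI)
    fix x y
    have "inner (cadj X (X x)) y = inner (X y) (X x)"
      by (subst inner_commute) (rule cadj_inner[OF Xb, symmetric])
    also have "\<dots> = inner x (cadj X (X y))"
      by (subst inner_commute) (rule cadj_inner[OF Xb])
    finally show "inner (cadj X (X x)) y = inner x (cadj X (X y))" .
  qed
  show P: "projop (\<lambda>x. cadj X (X x))"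
    unfolding projop_def using sym XX bounded_linear_compose[OF Abl Xbl] by simp
  have n: "norm (X x) ^ 2 = inner (cadj X (X x)) x" for x
  proof -
    have "inner (X x) (X x) = inner x (cadj X (X x))" by (rule cadj_inner[OF Xb])
    then show ?thesis by (simp add: power2_norm_eq_inner inner_commute)
  qed
  show nn: "norm (X x) ^ 2 = norm (cadj X (X x)) ^ 2" for x
    using n[of x] projop_inner_self[OF P, of x] by simp
  show "norm (X x) \<le> norm x" for x
  proof -
    have "norm (cadj X (X x)) \<le> norm x" by (rule projop_norm[OF P])
    then have "norm (cadj X (X x)) ^ 2 \<le> norm x ^ 2" by (simp add: power_mono)
    then have "norm (X x) ^ 2 \<le> norm x ^ 2" using nn[of x] by simp
    then show ?thesis by (rule power2_le_imp_le) (rule norm_ge_zero)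
  qed
  show "norm (X x) = norm x" if "cadj X (X x) = x" for x
  proof -
    have "norm (X x) ^ 2 = norm x ^ 2" using n[of x] that by (simp add: power2_norm_eq_inner)
    then show ?thesis by (simp add: power2_eq_iff_nonneg)
  qed
qed

lemma pi_adj:
  assumes X: "X \<in> partial_isometries"
  shows "cadj X \<in> partial_isometries" "cadj (cadj X) = X"
proof -
  have Xb: "bounded_clinear_op X" using X by (simp add: partial_isometries_def)
  have Ab: "bounded_clinear_op (cadj X)" by (rule cadj_bcl[OF Xb])
  show AA: "cadj (cadj X) = X"
  proof (rule cadj_unique[OF Ab])
    fix x y
    show "inner (cadj X x) y = inner x (X y)"
      using cadj_inner[OF Xb, of y x] by (simp only: inner_commute)
  qed
  have "cadj X (X (cadj X y)) = cadj X y" for y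
  proof (rule inner_ext)
    fix z
    have "inner z (cadj X (X (cadj X y))) = inner (X z) (X (cadj X y))"
      by (rule cadj_inner[OF Xb, symmetric])
    also have "\<dots> = inner (X (cadj X (X z))) (X (cadj X y))" by (simp only: pi_facts(2)[OF X])
    also have "\<dots> = inner (cadj X (X z)) (cadj X (X (cadj X y)))" by (rule cadj_inner[OF Xb])
    also have "\<dots> = inner (X (cadj X (X (cadj X y)))) (X z)"
      by (subst inner_commute) (rule cadj_inner[OF Xb, symmetric])
    also have "\<dots> = inner (X (cadj X y)) (X z)" by (simp only: pi_facts(2)[OF X])
    also have "\<dots> = inner (cadj X y) (cadj X (X z))" by (rule cadj_inner[OF Xb])
    also have "\<dots> = inner (X (cadj X (X z))) y"
      by (subst inner_commute) (rule cadj_inner[OF Xb, symmetric])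
    also have "\<dots> = inner z (cadj X y)"
      by (simp only: pi_facts(2)[OF X] cadj_inner[OF Xb])
    finally show "inner z (cadj X (X (cadj X y))) = inner z (cadj X y)" .
  qed
  then show "cadj X \<in> partial_isometries"
    using Ab AA by (simp add: partial_isometries_def)
qed


lemma cspan_empty: "cspan ({}::'a::complex_hilbert set) = {0}"
  by (simp add: cspan_def)

lemma cdim_zero: "cdim {0::'a::complex_hilbert} = 0"
proof -
  have ex: "\<exists>B. finite B \<and> card B = 0 \<and> B \<subseteq> {0::'a} \<and> cspan B = {0}"
    by (rule exI[of _ "{}"]) (simp only: cspan_empty finite.emptyI card.empty empty_subsetI simp_thms)
  have L: "(LEAST n. \<exists>B. finite B \<and> card B = n \<and> B \<subseteq> {0::'a} \<and> cspan B = {0}) = 0"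
    using ex by (rule Least_eq_0)
  have ex2: "\<exists>B. finite B \<and> B \<subseteq> {0::'a} \<and> cspan B = {0}"
    by (rule exI[of _ "{}"]) (simp only: cspan_empty finite.emptyI empty_subsetI simp_thms)
  have "cdim {0::'a} = enat (LEAST n. \<exists>B. finite B \<and> card B = n \<and> B \<subseteq> {0::'a} \<and> cspan B = {0})"
    unfolding cdim_def by (rule if_P[OF ex2])
  then show ?thesis by (simp only: L zero_enat_def)
qed

lemma cdim_zero_imp:
  assumes "cdim (S::'a::complex_hilbert set) = 0" shows "S = {0}"
proof -
  have c: "\<exists>B. finite B \<and> B \<subseteq> S \<and> cspan B = S"
  proof (rule ccontr)
    assume "\<not> ?thesis"
    then have "cdim S = \<infinity>" unfolding cdim_def by (rule if_not_P)
    then show False using assms by simp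
  qed
  have "cdim S = enat (LEAST n. \<exists>B. finite B \<and> card B = n \<and> B \<subseteq> S \<and> cspan B = S)"
    unfolding cdim_def by (rule if_P[OF c])
  then have L: "(LEAST n. \<exists>B. finite B \<and> card B = n \<and> B \<subseteq> S \<and> cspan B = S) = 0"
    using assms by (simp add: zero_enat_def)
  obtain B0 where "finite B0 \<and> B0 \<subseteq> S \<and> cspan B0 = S" using c by (elim exE)
  then have "\<exists>n B. finite B \<and> card B = n \<and> B \<subseteq> S \<and> cspan B = S" by auto
  then have "\<exists>B. finite B \<and> card B = (LEAST n. \<exists>B. finite B \<and> card B = n \<and> B \<subseteq> S \<and> cspan B = S) \<and> B \<subseteq> S \<and> cspan B = S"
    by (rule LeastI_ex)
  then obtain B where "finite B" "card B = 0" "cspan B = S" unfolding L by (elim exE conjE)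
  then have "B = {}" by simp
  then show ?thesis using \<open>cspan B = S\<close> by (simp add: cspan_empty)
qed

lemma projop_ran_ker: "projop P \<Longrightarrow> range P \<inter> ker_op P = {0}"
proof -
  assume P: "projop P"
  have P0: "P 0 = 0" using P by (simp add: projop_def linear_0[OF bounded_linear.linear])
  show ?thesis
  proof
    show "range P \<inter> ker_op P \<subseteq> {0}"
      by (auto simp: projop_range[OF P] ker_op_def)
    show "{0} \<subseteq> range P \<inter> ker_op P"
      using P0 by (auto simp: ker_op_def)
  qed
qed

lemma jidx_self: "projop P \<Longrightarrow> jidx P P \<le> (0::ereal)"
proof -
  assume P: "projop P"
  have a: "cdim (range P \<inter> ker_op P) = 0" by (simp only: projop_ran_ker[OF P] cdim_zero)
  have b: "cdim (ker_op P \<inter> range P) = 0" by (simp only: Int_commute[of "ker_op P"] projop_ran_ker[OF P] cdim_zero)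
  show ?thesis unfolding jidx_def Let_def a b by (simp add: zero_enat_def[symmetric])
qed

lemma jidx_le0:
  assumes P: "projop P" and Q: "projop Q" and j: "jidx P Q \<le> 0"
    and k: "\<And>q. P q = 0 \<Longrightarrow> Q q = q \<Longrightarrow> q = 0"
    and x: "P x = x" "Q x = 0"
  shows "x = (0::'a::complex_hilbert)"
proof -
  have P0: "P 0 = 0" using P by (simp add: projop_def linear_0[OF bounded_linear.linear])
  have Q0: "Q 0 = 0" using Q by (simp add: projop_def linear_0[OF bounded_linear.linear])
  have "ker_op P \<inter> range Q = {0}"
  proof
    show "ker_op P \<inter> range Q \<subseteq> {0}"
      using k by (auto simp: projop_range[OF Q] ker_op_def)
    show "{0} \<subseteq> ker_op P \<inter> range Q"
      using P0 Q0 by (auto simp: ker_op_def projop_range[OF Q])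
  qed
  then have b: "cdim (ker_op P \<inter> range Q) = 0" by (simp only: cdim_zero)
  define a where "a = cdim (range P \<inter> ker_op Q)"
  have "jidx P Q = ereal_of_enat a" unfolding jidx_def Let_def a_def[symmetric] b
    by (simp add: zero_enat_def[symmetric])
  then have "ereal_of_enat a \<le> 0" using j by simp
  then have "a = 0" by (cases a) (auto simp: zero_enat_def)
  then have R: "range P \<inter> ker_op Q = {0}" unfolding a_def by (rule cdim_zero_imp)
  have "x \<in> range P \<inter> ker_op Q" using x by (auto simp: ker_op_def projop_range[OF P])
  then show ?thesis unfolding R by simp
qed


lemma core:
  fixes S Y Y' P :: "'a::complex_hilbert \<Rightarrow> 'a"
  assumes P: "projop P"
    and Yb: "bounded_linear Y" and Y'b: "bounded_linear Y'"
    and adj: "\<And>x y. inner (Y x) y = inner x (Y' y)"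
    and pi: "\<And>x. Y (Y' (Y x)) = Y x"
    and Sb: "bounded_linear S"
    and Sker: "\<And>k. P k = 0 \<Longrightarrow> S k = 0"
    and Sd: "\<And>x. norm (S x - Y x) \<le> s * norm x"
    and j: "jidx P (\<lambda>x. Y' (Y x)) \<le> 0"
    and v: "P v = v" "norm v = 1" "norm (S v) \<le> \<gamma>" "\<gamma> + s < 1"
  shows False
proof -
  define Q where "Q x = Y' (Y x)" for x
  interpret Yl: bounded_linear Y by fact
  interpret Y'l: bounded_linear Y' by fact
  interpret Sl: bounded_linear S by fact
  have Pbl: "bounded_linear P" using P by (simp add: projop_def)
  interpret Pl: bounded_linear P by fact
  have Psym: "inner (P x) y = inner x (P y)" for x y using P by (simp add: projop_def symop_def)
  have Pidem: "P (P x) = P x" for x using P by (simp add: projop_def)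
  have Qbl: "bounded_linear Q" unfolding Q_def by (rule bounded_linear_compose[OF Y'b Yb])
  interpret Ql: bounded_linear Q by fact
  have Qsym: "symop Q" unfolding symop_def
  proof (intro allI)
    fix x y
    have "inner (Q x) y = inner (Y y) (Y x)" unfolding Q_def
      by (subst inner_commute) (rule adj[symmetric])
    also have "\<dots> = inner x (Q y)" unfolding Q_def
      by (subst inner_commute) (rule adj)
    finally show "inner (Q x) y = inner x (Q y)" .
  qed
  have Q: "projop Q" unfolding projop_def using Qbl Qsym by (simp add: Q_def pi)
  have nY: "norm (Y x) ^ 2 = inner x (Q x)" for x
    unfolding Q_def power2_norm_eq_inner by (rule adj)
  have nYle: "norm (Y x) \<le> norm x" for x
  proof -
    have "norm (Y x) ^ 2 = norm (Q x) ^ 2"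
      using nY[of x] projop_inner_self[OF Q, of x] by (simp add: inner_commute)
    also have "\<dots> \<le> norm x ^ 2" using projop_norm[OF Q, of x] by (simp add: power_mono)
    finally show ?thesis by (rule power2_le_imp_le) (rule norm_ge_zero)
  qed
  have nYq: "norm (Y q) = norm q" if "Q q = q" for q
  proof -
    have "norm (Y q) ^ 2 = norm q ^ 2" using nY[of q] that by (simp add: power2_norm_eq_inner)
    then show ?thesis by (simp add: power2_eq_iff_nonneg)
  qed
  have \<gamma>0: "0 \<le> \<gamma>" using v(3) norm_ge_zero order_trans by blast
  have s1: "s < 1" using v(4) \<gamma>0 by linarith
  have k: "q = 0" if "P q = 0" "Q q = q" for q
  proof -
    have "norm (Y q) \<le> s * norm q" using Sd[of q] Sker[OF that(1)] by simp
    then have "norm q \<le> s * norm q" using nYq[OF that(2)] by simp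
    then have "(1 - s) * norm q \<le> 0" by (simp add: algebra_simps)
    then have "norm q \<le> 0" using s1 by (simp add: mult_le_0_iff)
    then show ?thesis by simp
  qed
  have j': "jidx P Q \<le> 0" using j by (simp add: Q_def[abs_def])
  have ker0: "x = 0" if "P x = x" "Q x = 0" for x
    by (rule jidx_le0[OF P Q j' k that])
  define M0 where "M0 = P ` {q. Q q = q}"
  have subQ: "subspace {q. Q q = q}"
    by (auto simp: subspace_def Ql.add Ql.scale Ql.zero)
  have subM0: "subspace M0" unfolding M0_def
    by (rule linear_subspace_image[OF Pl.linear subQ])
  have clP: "closed {x. P x = x}"
    by (intro closed_Collect_eq Pl.continuous_on continuous_on_id)
  have M0P: "M0 \<subseteq> {x. P x = x}" by (auto simp: M0_def Pidem)
  have MP: "closure M0 \<subseteq> {x. P x = x}" by (rule closure_minimal[OF M0P clP])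
  obtain m where m: "m \<in> closure M0" "\<forall>y\<in>closure M0. inner (v - m) y = 0"
    using projection_exists[OF subspace_closure'[OF subM0] closed_closure, of v] by blast
  define z where "z = v - m"
  have Pz: "P z = z" using MP m(1) v(1) by (auto simp: z_def Pl.diff)
  have zq: "inner z q = 0" if "Q q = q" for q
  proof -
    have "P q \<in> M0" using that by (auto simp: M0_def)
    then have "P q \<in> closure M0" using closure_subset by blast
    then have "inner z (P q) = 0" using m(2) by (simp add: z_def)
    then show ?thesis using Psym[of z q] Pz by simp
  qed
  have "inner z (Q z) = 0" by (rule zq) (simp add: Q_def pi)
  then have "norm (Q z) ^ 2 = 0" using projop_inner_self[OF Q, of z] by (simp add: inner_commute)
  then have "Q z = 0" by simp
  then have "z = 0" by (rule ker0[OF Pz])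
  then have vM: "v \<in> closure M0" using m(1) by (simp add: z_def)
  define \<eta> where "\<eta> = (1 - s - \<gamma>) / 4"
  have \<eta>: "0 < \<eta>" using v(4) by (simp add: \<eta>_def)
  obtain y where y: "y \<in> M0" "dist y v < \<eta>" using vM \<eta> closure_approachable by blast
  then obtain q where q: "Q q = q" "y = P q" by (auto simp: M0_def)
  define w where "w = v + (q - P q)"
  have Pk: "P (q - P q) = 0" by (simp add: Pl.diff Pidem)
  have Sw: "S w = S v" using Sker[OF Pk] by (simp add: w_def Sl.add)
  have "norm w ^ 2 = norm v ^ 2 + norm (q - P q) ^ 2"
    unfolding w_def
  proof (rule norm_add_Pythagorean)
    show "orthogonal v (q - P q)" unfolding orthogonal_def
      using projop_orth[OF P, of v q] v(1) by simp
  qed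
  then have "1 \<le> norm w ^ 2" using v(2) by simp
  then have w1: "1 \<le> norm w" using power2_le_imp_le[of 1 "norm w"] by simp
  have wq: "norm (w - q) < \<eta>" using y(2) q(2) by (simp add: w_def dist_norm norm_minus_commute)
  have "Y q = Y w - Y (w - q)" by (simp add: Yl.diff)
  then have "norm (Y q) \<le> norm (Y w) + norm (Y (w - q))"
    using norm_triangle_ineq4[of "Y w" "Y (w - q)"] by simp
  then have "norm (Y w) \<ge> norm (Y q) - norm (Y (w - q))" by linarith
  moreover have "norm (Y (w - q)) \<le> norm (w - q)" by (rule nYle)
  moreover have "norm q \<ge> norm w - norm (w - q)"
  proof -
    have "w = q + (w - q)" by simp
    then have "norm w \<le> norm q + norm (w - q)" by (metis norm_triangle_ineq)
    then show ?thesis by linarith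
  qed
  ultimately have lo: "norm (Y w) \<ge> norm w - 2 * \<eta>" using nYq[OF q(1)] wq by linarith
  have "norm (Y w) \<le> norm (S w) + norm (S w - Y w)"
    using norm_triangle_ineq4[of "S w" "S w - Y w"] by simp
  also have "\<dots> \<le> \<gamma> + s * norm w" using Sd[of w] v(3) unfolding Sw by linarith
  finally have "norm w - 2 * \<eta> \<le> \<gamma> + s * norm w" using lo by linarith
  then have "(1 - s) * norm w \<le> \<gamma> + 2 * \<eta>" by (simp add: algebra_simps)
  moreover have "1 - s \<le> (1 - s) * norm w" using mult_left_mono[of 1 "norm w" "1 - s"] w1 s1 by simp
  ultimately have "1 - s \<le> \<gamma> + 2 * \<eta>" by linarith
  then show False using v(4) unfolding \<eta>_def by (simp add: field_simps)
qed



lemma approx: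
  fixes A P :: "'a::complex_hilbert \<Rightarrow> 'a"
  assumes Abl: "bounded_linear A" and As: "symop A" and Ap: "posop A" and P: "projop P"
    and AP: "\<And>x. A (P x) = A x"
    and w: "P w = w" "w \<noteq> 0" "inner (A w) w < c0 * norm w ^ 2" and e: "0 < \<epsilon>"
  shows "\<exists>v. P v = v \<and> norm v = 1 \<and> norm (A v) < c0 + \<epsilon>"
proof -
  interpret Al: bounded_linear A by fact
  have Pbl: "bounded_linear P" using P by (simp add: projop_def)
  interpret Pl: bounded_linear P by fact
  have Pidem: "P (P x) = P x" for x using P by (simp add: projop_def)
  have Asym: "inner (A x) y = inner x (A y)" for x y using As by (simp add: symop_def)
  define U where "U = (\<lambda>u. inner (A u) u) ` {u. P u = u \<and> norm u = 1}"
  define u0 where "u0 = (1 / norm w) *\<^sub>R w"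
  have u0: "P u0 = u0" "norm u0 = 1" using w by (simp_all add: u0_def Pl.scale)
  have Au0: "inner (A u0) u0 = inner (A w) w / norm w ^ 2"
    using w by (simp add: u0_def Al.scale power2_eq_square)
  have Au0c: "inner (A u0) u0 < c0"
    using w(3) w(2) unfolding Au0 by (simp add: divide_less_eq)
  have Une: "U \<noteq> {}" using u0 by (auto simp: U_def)
  have Ubdd: "bdd_below U" using Ap by (auto simp: U_def posop_def intro!: bdd_belowI[of _ 0])
  define c where "c = Inf U"
  have c0': "0 \<le> c" unfolding c_def using Une Ap by (auto simp: U_def posop_def intro!: cInf_greatest)
  have cle: "c \<le> inner (A u) u" if "P u = u" "norm u = 1" for u
    unfolding c_def using Ubdd that by (auto simp: U_def intro!: cInf_lower)
  have cc0: "c < c0" using cle[OF u0] Au0c by linarith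
  have quad: "inner (A x) x = inner (A (P x)) (P x)" for x
  proof -
    have "inner (A x) x = inner (A (P x)) x" by (simp add: AP)
    also have "\<dots> = inner (P x) (A x)" by (rule Asym)
    also have "\<dots> = inner (A (P x)) (P x)" by (simp add: AP inner_commute)
    finally show ?thesis .
  qed
  have lowb: "c * norm (P x) ^ 2 \<le> inner (A x) x" for x
  proof (cases "P x = 0")
    case True
    then show ?thesis using Ap by (simp add: posop_def)
  next
    case False
    define u where "u = (1 / norm (P x)) *\<^sub>R P x"
    have u: "P u = u" "norm u = 1" using False by (simp_all add: u_def Pl.scale Pidem)
    have "inner (A u) u = inner (A (P x)) (P x) / norm (P x) ^ 2"
      by (simp add: u_def Al.scale power2_eq_square)
    then have "c \<le> inner (A (P x)) (P x) / norm (P x) ^ 2" using cle[OF u] by simp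
    then show ?thesis using False by (simp add: quad[of x] le_divide_eq mult.commute)
  qed
  define B where "B x = A x - c *\<^sub>R P x" for x
  have Bbl: "bounded_linear B" unfolding B_def
    by (intro bounded_linear_sub Abl bounded_linear_compose[OF bounded_linear_scaleR_right Pbl])
  have Bsym: "symop B" using As P
    by (simp add: symop_def projop_def B_def inner_diff_left inner_diff_right)
  have Bpos: "posop B" unfolding posop_def
  proof
    fix x
    have "inner (B x) x = inner (A x) x - c * norm (P x) ^ 2"
      using projop_inner_self[OF P, of x] by (simp add: B_def inner_diff_left)
    then show "0 \<le> inner (B x) x" using lowb[of x] by simp
  qed
  obtain K where K: "\<And>x. norm (B x) \<le> norm x * K" "0 \<le> K"
    using bounded_linear.nonneg_bounded[OF Bbl] by blast
  define \<delta> where "\<delta> = \<epsilon>^2 / (K + 1)"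
  have \<delta>: "0 < \<delta>" using e K(2) by (simp add: \<delta>_def)
  have "Inf U < c + \<delta>" using \<delta> by (simp add: c_def)
  then obtain t where "t \<in> U" "t < c + \<delta>" using cInf_less_iff[OF Une Ubdd] by blast
  then obtain u where u: "P u = u" "norm u = 1" "inner (A u) u < c + \<delta>" by (auto simp: U_def)
  have "norm (B u) ^ 2 \<le> K * inner (B u) u"
    by (rule pos_cs[OF Bbl Bsym Bpos]) (metis K(1) mult.commute)
  also have "inner (B u) u = inner (A u) u - c"
    using u by (simp add: B_def inner_diff_left power2_norm_eq_inner[symmetric])
  also have "K * (inner (A u) u - c) \<le> K * \<delta>"
    using u(3) K(2) by (intro mult_left_mono) auto
  also have "K * \<delta> < \<epsilon>^2"
    using K(2) e by (simp add: \<delta>_def field_simps)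
  finally have "norm (B u) < \<epsilon>"
    using e by (simp add: power_less_imp_less_base[of "norm (B u)" 2 \<epsilon>])
  have "A u = B u + c *\<^sub>R u" using u by (simp add: B_def)
  then have "norm (A u) \<le> norm (B u) + c" using u c0' norm_triangle_ineq[of "B u" "c *\<^sub>R u"] by simp
  then have "norm (A u) < c0 + \<epsilon>" using \<open>norm (B u) < \<epsilon>\<close> cc0 by linarith
  then show ?thesis using u by blast
qed


lemma exceed_onorm:
  assumes f: "bounded_linear f" and lt: "b < onorm f" and b: "0 \<le> b"
  shows "\<exists>x. norm (f x) > b * norm x"
proof (rule ccontr)
  assume "\<not> ?thesis"
  then have "\<And>x. norm (f x) \<le> b * norm x" by (simp add: not_less)
  then have "onorm f \<le> b" by (rule onorm_bound[OF b])
  then show False using lt by simp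
qed

lemma numrad_exceed:
  fixes D :: "'a::real_inner \<Rightarrow> 'a"
  assumes D: "bounded_linear D" and S: "symop D" and x: "norm (D x) > m * norm x"
  shows "\<exists>u. \<bar>inner (D u) u\<bar> > m * norm u ^ 2"
proof (rule ccontr)
  assume "\<not> ?thesis"
  then have "\<And>u. \<bar>inner (D u) u\<bar> \<le> m * norm u ^ 2" by (simp add: not_less)
  from numrad[OF D S this] have "norm (D x) \<le> m * norm x" .
  then show False using x by simp
qed

locale polar_setup =
  fixes T V :: "'a::complex_hilbert \<Rightarrow> 'a"
  assumes T: "bounded_clinear_op T"
    and V: "V \<in> partial_isometries"
    and polar: "\<forall>x. T x = V (op_abs T x)"
    and kerV: "ker_op V = ker_op T"
begin

abbreviation "A \<equiv> op_abs T"
abbreviation "P \<equiv> (\<lambda>x. cadj V (V x))"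

lemma Tbl: "bounded_linear T" using T by (rule bclD)
lemma Ab: "bounded_clinear_op A" by (rule op_abs_props(1)[OF T])
lemma Abl: "bounded_linear A" using Ab by (rule bclD)
lemma As: "symop A" by (rule op_abs_props(2)[OF T])
lemma Ap: "posop A" by (rule op_abs_props(3)[OF T])
lemma AA: "A (A x) = cadj T (T x)" by (rule op_abs_props(4)[OF T])
lemma Vb: "bounded_clinear_op V" by (rule pi_facts(1)[OF V])
lemma Vbl: "bounded_linear V" using Vb by (rule bclD)
lemma PV: "projop P" by (rule pi_facts(3)[OF V])
lemma Pbl: "bounded_linear P" using PV by (simp add: projop_def)
lemma Pidem: "P (P x) = P x" using PV by (simp add: projop_def)
lemma Psym: "inner (P x) y = inner x (P y)" using PV by (simp add: projop_def symop_def)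
lemma Tpol: "T x = V (A x)" using polar by simp

lemma nA: "norm (A x) = norm (T x)"
proof -
  have "inner (A x) (A x) = inner x (A (A x))" using As by (simp add: symop_def)
  also have "\<dots> = inner (T x) (T x)" by (simp add: AA cadj_inner[OF T])
  finally show ?thesis by (simp add: norm_eq_sqrt_inner)
qed

lemma Pker: "P k = 0 \<Longrightarrow> V k = 0"
  using pi_facts(4)[OF V, of k] by simp

lemma Pker_T: "P k = 0 \<Longrightarrow> T k = 0"
proof -
  assume "P k = 0"
  then have "V k = 0" by (rule Pker)
  then have "k \<in> ker_op V" by (simp add: ker_op_def)
  then have "k \<in> ker_op T" using kerV by simp
  then show "T k = 0" by (simp add: ker_op_def)
qed

lemma Pker_A: "P k = 0 \<Longrightarrow> A k = 0"
  using Pker_T nA[of k] by simp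

lemma PP0: "P (x - P x) = 0"
  using Pidem linear_diff[OF bounded_linear.linear[OF Pbl]] by simp

lemma AP: "A (P x) = A x"
proof -
  have "A (x - P x) = 0" by (rule Pker_A[OF PP0])
  then show ?thesis by (simp add: linear_diff[OF bounded_linear.linear[OF Abl]])
qed

lemma VP: "V (P x) = V x"
proof -
  have "V (x - P x) = 0" by (rule Pker[OF PP0])
  then show ?thesis by (simp add: linear_diff[OF bounded_linear.linear[OF Vbl]])
qed

lemma PA: "P (A x) = A x"
proof -
  define y where "y = A x"
  define d where "d = y - P y"
  have Pd: "P d = 0" unfolding d_def by (rule PP0)
  have Ad: "A d = 0" by (rule Pker_A[OF Pd])
  have "inner d d = inner y d - inner (P y) d" by (simp add: d_def inner_diff_left)
  also have "inner (P y) d = 0" unfolding d_def by (rule projop_orth[OF PV])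
  also have "inner y d = inner x (A d)" using As by (simp add: y_def symop_def)
  finally have "inner d d = 0" by (simp add: Ad)
  then show ?thesis by (simp add: d_def y_def)
qed

lemma TV: "T x - V x = V (A x - P x)"
  by (simp add: Tpol VP linear_diff[OF bounded_linear.linear[OF Vbl]])

lemma dichotomy:
  assumes s0: "0 \<le> s" and sr: "s < onorm (\<lambda>x. T x - V x)"
  shows "(\<exists>w. norm (T w) > (1 + s) * norm w) \<or>
         (\<exists>v \<gamma>. P v = v \<and> norm v = 1 \<and> norm (A v) \<le> \<gamma> \<and> \<gamma> + s < 1)"
proof -
  define r where "r = onorm (\<lambda>x. T x - V x)"
  define s2 where "s2 = (s + r) / 2"
  have s2: "s < s2" "s2 < r" "0 \<le> s2" using sr s0 by (auto simp: s2_def r_def)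
  have TVbl: "bounded_linear (\<lambda>x. T x - V x)" by (rule bounded_linear_sub[OF Tbl Vbl])
  obtain x0 where x0: "norm (T x0 - V x0) > s2 * norm x0"
    using exceed_onorm[OF TVbl _ s2(3)] s2(2) by (auto simp: r_def)
  define D where "D x = A x - P x" for x
  have Dbl: "bounded_linear D" unfolding D_def by (rule bounded_linear_sub[OF Abl Pbl])
  interpret Dl: bounded_linear D by fact
  have Dsym: "symop D" using As by (simp add: symop_def D_def inner_diff_left inner_diff_right Psym)
  have "norm (T x0 - V x0) \<le> norm (D x0)"
    unfolding TV D_def by (rule pi_facts(5)[OF V])
  then have "norm (D x0) > s2 * norm x0" using x0 by linarith
  then obtain u where u: "\<bar>inner (D u) u\<bar> > s2 * norm u ^ 2"
    using numrad_exceed[OF Dbl Dsym] by blast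
  define w where "w = P u"
  have DP: "D (P x) = D x" for x by (simp add: D_def AP Pidem)
  have PD: "P (D x) = D x" for x
    by (simp add: D_def PA Pidem linear_diff[OF bounded_linear.linear[OF Pbl]])
  have iw: "inner (D w) w = inner (D u) u"
  proof -
    have "inner (D w) w = inner (D u) (P u)" by (simp add: w_def DP)
    also have "\<dots> = inner (P (D u)) u" by (simp add: Psym)
    also have "\<dots> = inner (D u) u" by (simp add: PD)
    finally show ?thesis .
  qed
  have nw: "norm w \<le> norm u" unfolding w_def by (rule projop_norm[OF PV])
  then have "s2 * norm w ^ 2 \<le> s2 * norm u ^ 2" using s2(3) by (intro mult_left_mono power_mono) auto
  then have wbig: "\<bar>inner (D w) w\<bar> > s2 * norm w ^ 2" using u iw by linarith
  have Pw: "P w = w" by (simp add: w_def Pidem)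
  have w0: "w \<noteq> 0" using wbig by auto
  have iA: "inner (A w) w = inner (D w) w + norm w ^ 2"
    using Pw by (simp add: D_def inner_diff_left power2_norm_eq_inner)
  show ?thesis
  proof (cases "inner (D w) w > 0")
    case True
    then have "inner (A w) w > (1 + s2) * norm w ^ 2" using wbig iA by (simp add: algebra_simps)
    moreover have "inner (A w) w \<le> norm (A w) * norm w" by (rule norm_cauchy_schwarz)
    ultimately have "(1 + s2) * norm w * norm w < norm (A w) * norm w"
      by (simp add: power2_eq_square mult.assoc)
    then have "(1 + s2) * norm w < norm (A w)" using w0 by simp
    moreover have "(1 + s) * norm w \<le> (1 + s2) * norm w" using s2 by (intro mult_right_mono) auto
    ultimately have "norm (T w) > (1 + s) * norm w" by (simp add: nA)
    then show ?thesis by blast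
  next
    case False
    then have "inner (D w) w < - s2 * norm w ^ 2" using wbig by linarith
    then have "inner (A w) w < (1 - s2) * norm w ^ 2" using iA by (simp add: algebra_simps)
    moreover have "0 < (s2 - s) / 2" using s2 by simp
    ultimately obtain v where v: "P v = v" "norm v = 1" "norm (A v) < (1 - s2) + (s2 - s) / 2"
      using approx[OF Abl As Ap PV AP Pw w0] by blast
    have "norm (A v) + s < 1" using v(3) s2(1) by (simp add: field_simps)
    then show ?thesis using v by blast
  qed
qed

lemma caseA:
  assumes X: "X \<in> partial_isometries" and Sd: "\<And>x. norm (T x - X x) \<le> s * norm x"
    and w: "norm (T w) > (1 + s) * norm w"
  shows False
proof -
  have "norm (T w) \<le> norm (T w - X w) + norm (X w)"
    using norm_triangle_ineq[of "T w - X w" "X w"] by simp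
  also have "\<dots> \<le> s * norm w + norm w" using Sd[of w] pi_facts(5)[OF X, of w] by linarith
  finally show False using w by (simp add: algebra_simps)
qed

lemma PV': "projop (\<lambda>x. V (cadj V x))"
  using pi_facts(3)[OF pi_adj(1)[OF V]] by (simp add: pi_adj(2)[OF V])

lemma Tadj: "cadj T = (\<lambda>y. A (cadj V y))"
proof (rule cadj_unique[OF T])
  fix x y
  have "inner (T x) y = inner (V (A x)) y" by (simp add: Tpol)
  also have "\<dots> = inner (A x) (cadj V y)" by (rule cadj_inner[OF Vb])
  also have "\<dots> = inner x (A (cadj V y))" using As by (simp add: symop_def)
  finally show "inner (T x) y = inner x (A (cadj V y))" .
qed

lemma adj_bound:
  assumes X: "X \<in> partial_isometries" and Sd: "\<And>x. norm (T x - X x) \<le> s * norm x"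
  shows "norm (cadj T x - cadj X x) \<le> s * norm x"
proof -
  have Xb: "bounded_clinear_op X" by (rule pi_facts(1)[OF X])
  define e where "e = cadj T x - cadj X x"
  have ie: "inner e z = inner x (T z - X z)" for z
  proof -
    have a: "inner (cadj T x) z = inner x (T z)"
      using cadj_inner[OF T, of z x] by (simp only: inner_commute)
    have b: "inner (cadj X x) z = inner x (X z)"
      using cadj_inner[OF Xb, of z x] by (simp only: inner_commute)
    show ?thesis by (simp add: e_def inner_diff_left inner_diff_right a b)
  qed
  have "norm e ^ 2 = inner x (T e - X e)" by (simp add: power2_norm_eq_inner ie)
  also have "\<dots> \<le> norm x * norm (T e - X e)" by (rule norm_cauchy_schwarz)
  also have "\<dots> \<le> norm x * (s * norm e)" by (rule mult_left_mono[OF Sd]) simp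
  finally have h: "norm e * norm e \<le> (s * norm x) * norm e" by (simp add: power2_eq_square mult_ac)
  show ?thesis
  proof (cases "e = 0")
    case True
    have "0 \<le> s * norm x"
    proof (cases "x = 0")
      case False
      have "norm (T x - X x) \<le> s * norm x" by (rule Sd)
      then show ?thesis using norm_ge_zero order_trans by blast
    qed simp
    then show ?thesis using True by (simp add: e_def)
  next
    case False
    then have "0 < norm e" by simp
    then show ?thesis using h unfolding e_def[symmetric] by (rule mult_right_le_imp_le[rotated])
  qed
qed

end

theorem theorem2p3:
  fixes T V :: "'a::complex_hilbert \<Rightarrow> 'a"
  assumes sep: "separable_space (euclidean :: 'a topology)"
    and T: "bounded_clinear_op T"
    and V: "V \<in> partial_isometries"
    and polar: "\<forall>x. T x = V (op_abs T x)"
    and kerV: "ker_op V = ker_op T"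
  shows "V \<in> partial_isometries \<and> jidx (cadj V \<circ> V) (cadj V \<circ> V) \<le> 0
       \<and> (\<forall>X \<in> partial_isometries. jidx (cadj V \<circ> V) (cadj X \<circ> X) \<le> 0 \<longrightarrow>
              onorm (\<lambda>x. T x - V x) \<le> onorm (\<lambda>x. T x - X x))
       \<and> jidx (V \<circ> cadj V) (V \<circ> cadj V) \<le> 0
       \<and> (\<forall>X \<in> partial_isometries. jidx (V \<circ> cadj V) (X \<circ> cadj X) \<le> 0 \<longrightarrow>
              onorm (\<lambda>x. T x - V x) \<le> onorm (\<lambda>x. T x - X x))"
proof -
  interpret polar_setup T V using T V polar kerV by unfold_locales
  have j1: "jidx (cadj V \<circ> V) (cadj V \<circ> V) \<le> 0"
    unfolding comp_def by (rule jidx_self[OF PV])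
  have j2: "jidx (V \<circ> cadj V) (V \<circ> cadj V) \<le> 0"
    unfolding comp_def by (rule jidx_self[OF PV'])
  have fam1: "onorm (\<lambda>x. T x - V x) \<le> onorm (\<lambda>x. T x - X x)"
    if X: "X \<in> partial_isometries" and j: "jidx (cadj V \<circ> V) (cadj X \<circ> X) \<le> 0" for X
  proof (rule ccontr)
    assume "\<not> ?thesis"
    then have lt: "onorm (\<lambda>x. T x - X x) < onorm (\<lambda>x. T x - V x)" by simp
    define s where "s = onorm (\<lambda>x. T x - X x)"
    have Xb: "bounded_clinear_op X" by (rule pi_facts(1)[OF X])
    have Xbl: "bounded_linear X" using Xb by (rule bclD)
    have TXbl: "bounded_linear (\<lambda>x. T x - X x)" by (rule bounded_linear_sub[OF Tbl Xbl])
    have s0: "0 \<le> s" unfolding s_def by (rule onorm_pos_le[OF TXbl])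
    have Sd: "norm (T x - X x) \<le> s * norm x" for x
      unfolding s_def using onorm[OF TXbl, of x] by simp
    from dichotomy[OF s0 lt[folded s_def]] show False
    proof
      assume "\<exists>w. norm (T w) > (1 + s) * norm w"
      then obtain w where "norm (T w) > (1 + s) * norm w" by blast
      then show False by (rule caseA[OF X Sd])
    next
      assume "\<exists>v \<gamma>. P v = v \<and> norm v = 1 \<and> norm (A v) \<le> \<gamma> \<and> \<gamma> + s < 1"
      then obtain v \<gamma> where v: "P v = v" "norm v = 1" "norm (A v) \<le> \<gamma>" "\<gamma> + s < 1" by blast
      have j': "jidx P (\<lambda>x. cadj X (X x)) \<le> 0" using j by (simp add: comp_def)
      show False
      proof (rule core[OF PV Xbl bclD[OF cadj_bcl[OF Xb]] cadj_inner[OF Xb] pi_facts(2)[OF X] Tbl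
            Pker_T Sd j' v(1,2)])
        show "norm (T v) \<le> \<gamma>" using v(3) nA by simp
        show "\<gamma> + s < 1" by (rule v(4))
      qed
    qed
  qed
  have fam2: "onorm (\<lambda>x. T x - V x) \<le> onorm (\<lambda>x. T x - X x)"
    if X: "X \<in> partial_isometries" and j: "jidx (V \<circ> cadj V) (X \<circ> cadj X) \<le> 0" for X
  proof (rule ccontr)
    assume "\<not> ?thesis"
    then have lt: "onorm (\<lambda>x. T x - X x) < onorm (\<lambda>x. T x - V x)" by simp
    define s where "s = onorm (\<lambda>x. T x - X x)"
    have Xb: "bounded_clinear_op X" by (rule pi_facts(1)[OF X])
    have Xbl: "bounded_linear X" using Xb by (rule bclD)
    have TXbl: "bounded_linear (\<lambda>x. T x - X x)" by (rule bounded_linear_sub[OF Tbl Xbl])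
    have s0: "0 \<le> s" unfolding s_def by (rule onorm_pos_le[OF TXbl])
    have Sd: "norm (T x - X x) \<le> s * norm x" for x
      unfolding s_def using onorm[OF TXbl, of x] by simp
    from dichotomy[OF s0 lt[folded s_def]] show False
    proof
      assume "\<exists>w. norm (T w) > (1 + s) * norm w"
      then obtain w where "norm (T w) > (1 + s) * norm w" by blast
      then show False by (rule caseA[OF X Sd])
    next
      assume "\<exists>v \<gamma>. P v = v \<and> norm v = 1 \<and> norm (A v) \<le> \<gamma> \<and> \<gamma> + s < 1"
      then obtain v \<gamma> where v: "P v = v" "norm v = 1" "norm (A v) \<le> \<gamma>" "\<gamma> + s < 1" by blast
      have j': "jidx (\<lambda>x. V (cadj V x)) (\<lambda>x. X (cadj X x)) \<le> 0" using j by (simp add: comp_def)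
      have XAb: "bounded_clinear_op (cadj X)" by (rule cadj_bcl[OF Xb])
      have adj: "inner (cadj X x) y = inner x (X y)" for x y
        using cadj_inner[OF XAb, of x y] by (simp add: pi_adj(2)[OF X])
      have pi: "cadj X (X (cadj X x)) = cadj X x" for x
        using pi_facts(2)[OF pi_adj(1)[OF X], of x] by (simp add: pi_adj(2)[OF X])
      have Sker: "cadj T k = 0" if "V (cadj V k) = 0" for k
      proof -
        have "norm (cadj V k) ^ 2 = norm (cadj (cadj V) (cadj V k)) ^ 2"
          by (rule pi_facts(4)[OF pi_adj(1)[OF V]])
        then have "cadj V k = 0" using that by (simp add: pi_adj(2)[OF V])
        then show ?thesis using Tadj linear_0[OF bounded_linear.linear[OF Abl]] by simp
      qed
      have Sd': "norm (cadj T x - cadj X x) \<le> s * norm x" for x by (rule adj_bound[OF X Sd])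
      have v1: "V (cadj V (V v)) = V v" by (rule pi_facts(2)[OF V])
      have v2: "norm (V v) = 1" using pi_facts(6)[OF V v(1)] v(2) by simp
      have v3: "norm (cadj T (V v)) \<le> \<gamma>" using v(1,3) by (simp add: Tadj)
      show False
        by (rule core[OF PV' bclD[OF XAb] Xbl adj pi bclD[OF cadj_bcl[OF T]] Sker Sd' j' v1 v2 v3 v(4)])
    qed
  qed
  show ?thesis using V j1 j2 fam1 fam2 by blast
qed


end
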